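(* Let $E$ be a Dedekind complete Riesz space with weak order unit $e$, let $T$ be a conditional expectation operator on $E$ with $Te=e$, and assume $E$ is $T$-universally complete ($E=L^1(T)$). Let $U$ and $V$ be conditional expectation operators on $E$ compatible with $T$. Then for every $f\in R(V)\cap L^\infty(T)$, $$\|Uf-Tf\|_{T,1}\le 4\,\alpha_T(U,V)\,\|f\|_{T,\infty}.$$
   Context: A conditional expectation operator on a Dedekind complete Riesz space $E$ with weak order unit is a positive, order continuous, linear projection $T:E\to E$ whose range $R(T)$ is a Dedekind complete Riesz subspace of $E$ and such that $Te$ is a weak order unit of $E$ for every weak order unit $e$ of $E$. $E^u$ denotes the universal completion of $E$. $E$ is $T$-universally complete if for every upwards directed net $(f_\alpha)$ in $E_+$ with $(Tf_\alpha)$ order bounded in $E^u$, the net $(f_\alpha)$ is order convergent in $E$; then $L^1(T):=E$. Products are taken in the $f$-algebra $E^u$ with multiplicative unit $e$. $L^\infty(T):=\{f\in L^1(T): |f|\le g\text{ for some } g\in R(T)_+\}$, $\|f\|_{T,1}:=T|f|$, $\|f\|_{T,\infty}:=\inf\{g\in R(T)_+:|f|\le g\}$. A conditional expectation operator $U$ on $E$ is compatible with $T$ if $TU=T=UT$; $\mathcal{B}(U)$ is the set of band projections $P$ on $E$ with $Pe\in R(U)$. $\alpha_T(U,V):=\sup\{|TPQe-TPe\cdot TQe| : P\in\mathcal{B}(U),\ Q\in\mathcal{B}(V)\}$ (supremum in the order of $E$). *)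

theory Defs
  imports Main "HOL-Library.Lattice_Algebras"
begin

(* In the theorem it will additionally be conditionally complete (= Dedekind complete),
   laterally complete, and carry an f-algebra multiplication m with unit e:
   'a plays the role of the universal completion E^u, and E is a subset of 'a. *)

definition vabs :: "'a::lattice_ab_group_add \<Rightarrow> 'a" where
  "vabs x = sup x (- x)"

definition vdisj :: "'a::lattice_ab_group_add \<Rightarrow> 'a \<Rightarrow> bool" where
  "vdisj x y \<longleftrightarrow> inf (vabs x) (vabs y) = 0"

definition riesz_subspace :: "'a::{ordered_real_vector,lattice_ab_group_add} set \<Rightarrow> bool" where
  "riesz_subspace A \<longleftrightarrow> 0 \<in> A \<and> (\<forall>x\<in>A. \<forall>y\<in>A. x + y \<in> A) \<and>
     (\<forall>c::real. \<forall>x\<in>A. c *\<^sub>R x \<in> A) \<and> (\<forall>x\<in>A. \<forall>y\<in>A. sup x y \<in> A)"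

definition is_lub_in :: "'a::order set \<Rightarrow> 'a set \<Rightarrow> 'a \<Rightarrow> bool" where
  "is_lub_in A S s \<longleftrightarrow> s \<in> A \<and> (\<forall>x\<in>S. x \<le> s) \<and> (\<forall>b\<in>A. (\<forall>x\<in>S. x \<le> b) \<longrightarrow> s \<le> b)"

definition is_glb_in :: "'a::order set \<Rightarrow> 'a set \<Rightarrow> 'a \<Rightarrow> bool" where
  "is_glb_in A S s \<longleftrightarrow> s \<in> A \<and> (\<forall>x\<in>S. s \<le> x) \<and> (\<forall>b\<in>A. (\<forall>x\<in>S. b \<le> x) \<longrightarrow> b \<le> s)"

definition sup_in :: "'a::order set \<Rightarrow> 'a set \<Rightarrow> 'a" where
  "sup_in A S = (THE s. is_lub_in A S s)"

definition inf_in :: "'a::order set \<Rightarrow> 'a set \<Rightarrow> 'a" where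
  "inf_in A S = (THE s. is_glb_in A S s)"

definition dedekind_complete_in :: "'a::order set \<Rightarrow> bool" where
  "dedekind_complete_in A \<longleftrightarrow>
     (\<forall>S. S \<subseteq> A \<and> S \<noteq> {} \<and> (\<exists>b\<in>A. \<forall>x\<in>S. x \<le> b) \<longrightarrow> (\<exists>s. is_lub_in A S s))"

definition up_directed :: "'a::order set \<Rightarrow> bool" where
  "up_directed D \<longleftrightarrow> (\<forall>x\<in>D. \<forall>y\<in>D. \<exists>z\<in>D. x \<le> z \<and> y \<le> z)"

definition down_directed :: "'a::order set \<Rightarrow> bool" where
  "down_directed D \<longleftrightarrow> (\<forall>x\<in>D. \<forall>y\<in>D. \<exists>z\<in>D. z \<le> x \<and> z \<le> y)"

definition order_dense :: "'a::{ordered_real_vector,lattice_ab_group_add} set \<Rightarrow> bool" where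
  "order_dense E \<longleftrightarrow> (\<forall>x. 0 < x \<longrightarrow> (\<exists>y\<in>E. 0 < y \<and> y \<le> x))"

text \<open>Lateral completeness of the ambient space: every set of pairwise disjoint positive
  elements is bounded above (hence has a supremum, the space being Dedekind complete).\<close>
definition laterally_complete :: "'a::{ordered_real_vector,lattice_ab_group_add} itself \<Rightarrow> bool" where
  "laterally_complete TYPE('a) \<longleftrightarrow>
     (\<forall>S::'a set. (\<forall>x\<in>S. 0 \<le> x) \<and> (\<forall>x\<in>S. \<forall>y\<in>S. x \<noteq> y \<longrightarrow> vdisj x y) \<longrightarrow> bdd_above S)"

definition f_algebra_unit :: "('a::{ordered_real_vector,lattice_ab_group_add} \<Rightarrow> 'a \<Rightarrow> 'a) \<Rightarrow> 'a \<Rightarrow> bool" where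
  "f_algebra_unit m e \<longleftrightarrow>
     (\<forall>x y z. m (x + y) z = m x z + m y z) \<and>
     (\<forall>x y z. m x (y + z) = m x y + m x z) \<and>
     (\<forall>c x y. m (c *\<^sub>R x) y = c *\<^sub>R m x y \<and> m x (c *\<^sub>R y) = c *\<^sub>R m x y) \<and>
     (\<forall>x y z. m (m x y) z = m x (m y z)) \<and>
     (\<forall>x y. 0 \<le> x \<and> 0 \<le> y \<longrightarrow> 0 \<le> m x y) \<and>
     (\<forall>x y z. 0 \<le> x \<and> 0 \<le> y \<and> 0 \<le> z \<and> inf x y = 0 \<longrightarrow>
        inf (m x z) y = 0 \<and> inf (m z x) y = 0) \<and>
     (\<forall>x. m e x = x \<and> m x e = x)"

definition weak_order_unit_in :: "'a::{ordered_real_vector,lattice_ab_group_add} set \<Rightarrow> 'a \<Rightarrow> bool" where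
  "weak_order_unit_in E w \<longleftrightarrow> w \<in> E \<and> 0 \<le> w \<and> (\<forall>x\<in>E. inf (vabs x) w = 0 \<longrightarrow> x = 0)"

definition linear_on :: "'a::{ordered_real_vector,lattice_ab_group_add} set \<Rightarrow> ('a \<Rightarrow> 'a) \<Rightarrow> bool" where
  "linear_on E T \<longleftrightarrow> (\<forall>x\<in>E. \<forall>y\<in>E. T (x + y) = T x + T y) \<and> (\<forall>c::real. \<forall>x\<in>E. T (c *\<^sub>R x) = c *\<^sub>R T x)"

definition positive_on :: "'a::{ordered_real_vector,lattice_ab_group_add} set \<Rightarrow> ('a \<Rightarrow> 'a) \<Rightarrow> bool" where
  "positive_on E T \<longleftrightarrow> (\<forall>x\<in>E. 0 \<le> x \<longrightarrow> 0 \<le> T x)"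

text \<open>Order continuity (for positive operators): x_alpha decreasing to 0 implies T x_alpha decreasing to 0,
  expressed with downward directed sets (ranges of decreasing nets).\<close>
definition order_continuous_on :: "'a::{ordered_real_vector,lattice_ab_group_add} set \<Rightarrow> ('a \<Rightarrow> 'a) \<Rightarrow> bool" where
  "order_continuous_on E T \<longleftrightarrow>
     (\<forall>D. D \<subseteq> E \<and> D \<noteq> {} \<and> down_directed D \<and> is_glb_in E D 0 \<longrightarrow> is_glb_in E (T ` D) 0)"

definition cond_exp :: "'a::{ordered_real_vector,lattice_ab_group_add} set \<Rightarrow> ('a \<Rightarrow> 'a) \<Rightarrow> bool" where
  "cond_exp E T \<longleftrightarrow> T ` E \<subseteq> E \<and> linear_on E T \<and> positive_on E T \<and> order_continuous_on E T \<and>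
     (\<forall>x\<in>E. T (T x) = T x) \<and> riesz_subspace (T ` E) \<and> dedekind_complete_in (T ` E) \<and>
     (\<forall>w. weak_order_unit_in E w \<longrightarrow> weak_order_unit_in E (T w))"

text \<open>T-universal completeness: every upwards directed net in E_+ whose image under T is order bounded
  in the universal completion is order convergent in E (for increasing nets: has a supremum in E).\<close>
definition T_universally_complete :: "'a::{ordered_real_vector,lattice_ab_group_add} set \<Rightarrow> ('a \<Rightarrow> 'a) \<Rightarrow> bool" where
  "T_universally_complete E T \<longleftrightarrow>
     (\<forall>D. D \<subseteq> E \<and> D \<noteq> {} \<and> (\<forall>x\<in>D. 0 \<le> x) \<and> up_directed D \<and> bdd_above (T ` D) \<longrightarrow>
        (\<exists>s. is_lub_in E D s))"

definition compatible :: "'a::{ordered_real_vector,lattice_ab_group_add} set \<Rightarrow> ('a \<Rightarrow> 'a) \<Rightarrow> ('a \<Rightarrow> 'a) \<Rightarrow> bool" where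
  "compatible E T U \<longleftrightarrow> (\<forall>x\<in>E. T (U x) = T x \<and> U (T x) = T x)"

definition band_in :: "'a::{ordered_real_vector,lattice_ab_group_add} set \<Rightarrow> 'a set \<Rightarrow> bool" where
  "band_in E B \<longleftrightarrow> B \<subseteq> E \<and> riesz_subspace B \<and>
     (\<forall>x\<in>E. \<forall>y\<in>B. vabs x \<le> vabs y \<longrightarrow> x \<in> B) \<and>
     (\<forall>S s. S \<subseteq> B \<and> is_lub_in E S s \<longrightarrow> s \<in> B)"

definition disj_compl :: "'a::{ordered_real_vector,lattice_ab_group_add} set \<Rightarrow> 'a set \<Rightarrow> 'a set" where
  "disj_compl E B = {x\<in>E. \<forall>y\<in>B. vdisj x y}"

definition band_projection :: "'a::{ordered_real_vector,lattice_ab_group_add} set \<Rightarrow> ('a \<Rightarrow> 'a) \<Rightarrow> bool" where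
  "band_projection E P \<longleftrightarrow> (\<exists>B. band_in E B \<and> (\<forall>x\<in>E. P x \<in> B \<and> x - P x \<in> disj_compl E B))"

definition BP :: "'a::{ordered_real_vector,lattice_ab_group_add} set \<Rightarrow> 'a \<Rightarrow> ('a \<Rightarrow> 'a) \<Rightarrow> ('a \<Rightarrow> 'a) set" where
  "BP E e U = {P. band_projection E P \<and> P e \<in> U ` E}"

definition alphaT :: "'a::{ordered_real_vector,lattice_ab_group_add} set \<Rightarrow> ('a \<Rightarrow> 'a \<Rightarrow> 'a) \<Rightarrow> 'a \<Rightarrow>
    ('a \<Rightarrow> 'a) \<Rightarrow> ('a \<Rightarrow> 'a) \<Rightarrow> ('a \<Rightarrow> 'a) \<Rightarrow> 'a" where
  "alphaT E m e T U V = sup_in E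
     {vabs (T (P (Q e)) - m (T (P e)) (T (Q e))) | P Q. P \<in> BP E e U \<and> Q \<in> BP E e V}"

definition Linfty :: "'a::{ordered_real_vector,lattice_ab_group_add} set \<Rightarrow> ('a \<Rightarrow> 'a) \<Rightarrow> 'a set" where
  "Linfty E T = {f\<in>E. \<exists>g\<in>T ` E. 0 \<le> g \<and> vabs f \<le> g}"

definition normT1 :: "('a::{ordered_real_vector,lattice_ab_group_add} \<Rightarrow> 'a) \<Rightarrow> 'a \<Rightarrow> 'a" where
  "normT1 T f = T (vabs f)"

definition normTinf :: "'a::{ordered_real_vector,lattice_ab_group_add} set \<Rightarrow> ('a \<Rightarrow> 'a) \<Rightarrow> 'a \<Rightarrow> 'a" where
  "normTinf E T f = inf_in (T ` E) {g \<in> T ` E. 0 \<le> g \<and> vabs f \<le> g}"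

end

theory Submission
  imports Defs
begin



lemma vabs_prts: "vabs (x::'a::lattice_ab_group_add) = pprt x - nprt x"
proof -
  have "pprt x - nprt x = sup x 0 + sup (-x) 0"
    by (simp add: pprt_def nprt_def neg_inf_eq_sup)
  also have "\<dots> = sup (sup x 0 + (-x)) (sup x 0 + 0)" by (simp add: add_sup_distrib_left)
  also have "\<dots> = sup (sup 0 (-x)) (sup x 0)"
  proof -
    have "sup x 0 + (-x) = sup 0 (-x)" using add_sup_distrib_right[of x 0 "-x"] by simp
    thus ?thesis by simp
  qed
  also have "\<dots> = sup (sup x (-x)) 0" by (simp add: sup_aci)
  also have "\<dots> = sup x (-x)"
  proof -
    have "0 \<le> sup x (-x)"
    proof -
      have "0 \<le> sup x (-x) + sup x (-x)"
        using add_mono[OF sup.cobounded1[of x "-x"] sup.cobounded2[of "-x" x]] by simp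
      thus ?thesis by simp
    qed
    thus ?thesis by (simp add: sup.absorb1)
  qed
  finally show ?thesis by (simp add: vabs_def)
qed

lemma vabs_nonneg[simp]: "0 \<le> vabs (x::'a::lattice_ab_group_add)"
proof -
  have "nprt x \<le> pprt x" using order_trans[OF nprt_le_zero zero_le_pprt] .
  hence "0 \<le> pprt x - nprt x" by (simp only: diff_ge_0_iff_ge)
  thus ?thesis by (simp only: vabs_prts)
qed

lemma vabs_pos[simp]: "0 \<le> (x::'a::lattice_ab_group_add) \<Longrightarrow> vabs x = x"
  by (simp add: vabs_prts)

lemma vabs_ge: "(x::'a::lattice_ab_group_add) \<le> vabs x" "- x \<le> vabs x"
  by (simp_all add: vabs_def)

lemma vabs_le_iff: "vabs (x::'a::lattice_ab_group_add) \<le> c \<longleftrightarrow> x \<le> c \<and> - x \<le> c"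
  by (simp add: vabs_def)

lemma vabs_minus[simp]: "vabs (- (x::'a::lattice_ab_group_add)) = vabs x"
  by (simp add: vabs_def sup_commute)

lemma vabs_0[simp]: "vabs (0::'a::lattice_ab_group_add) = 0"
  by (simp add: vabs_def)

lemma vabs_eq_0: "vabs (x::'a::lattice_ab_group_add) = 0 \<longleftrightarrow> x = 0"
  by (simp add: vabs_def)

lemma vabs_triangle: "vabs ((x::'a::lattice_ab_group_add) + y) \<le> vabs x + vabs y"
  unfolding vabs_le_iff
  by (metis add_mono minus_add_distrib vabs_ge)

lemma vabs_diff: "vabs ((x::'a::lattice_ab_group_add) - y) \<le> vabs x + vabs y"
  by (metis diff_conv_add_uminus vabs_minus vabs_triangle)

lemma pprt_le_vabs: "pprt (x::'a::lattice_ab_group_add) \<le> vabs x"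
  by (simp add: vabs_prts)

lemma nprt_le_vabs: "- nprt (x::'a::lattice_ab_group_add) \<le> vabs x"
  by (simp add: vabs_prts)

lemma inf_sub_additive:
  fixes a b c :: "'a::lattice_ab_group_add"
  assumes "0 \<le> a" "0 \<le> b" "0 \<le> c"
  shows "inf a (b + c) \<le> inf a b + inf a c"
proof -
  have "inf a b + inf a c = inf (inf (a + a) (a + c)) (inf (b + a) (b + c))"
    by (simp add: add_inf_distrib_left add_inf_distrib_right add.commute inf_aci)
  moreover have "inf a (b + c) \<le> inf (inf (a + a) (a + c)) (inf (b + a) (b + c))"
  proof -
    have 1: "inf a (b + c) \<le> a" "inf a (b + c) \<le> b + c" by auto
    have "a \<le> a + a" "a \<le> a + c" "a \<le> b + a" using assms by (simp_all add: add_increasing add_increasing2)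
    with 1 show ?thesis by (meson le_inf_iff order_trans)
  qed
  ultimately show ?thesis by simp
qed

lemma inf_pprt_nprt: "inf (pprt (x::'a::lattice_ab_group_add)) (- nprt x) = 0"
proof -
  have n: "- nprt x = sup (-x) 0" unfolding nprt_def by (simp add: neg_inf_eq_sup)
  have "pprt x + (- nprt x) = vabs x" by (simp add: vabs_prts)
  moreover have "sup (pprt x) (- nprt x) = vabs x"
  proof -
    have "sup (pprt x) (- nprt x) = sup (sup x (-x)) 0" unfolding n pprt_def by (simp add: sup_aci)
    also have "\<dots> = vabs x" using vabs_nonneg[of x] unfolding vabs_def by (simp add: sup.absorb1)
    finally show ?thesis .
  qed
  moreover have "pprt x + (- nprt x) = sup (pprt x) (- nprt x) + inf (pprt x) (- nprt x)"
    by (rule add_eq_inf_sup)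
  ultimately show ?thesis by simp
qed

lemma disj_add_sup:
  fixes u v :: "'a::lattice_ab_group_add"
  assumes "inf u v = 0" shows "u + v = sup u v"
  using add_eq_inf_sup[of u v] assms by simp

lemma scaleR_sup:
  fixes x y :: "'a::{ordered_real_vector,lattice_ab_group_add}"
  assumes "0 \<le> c" shows "c *\<^sub>R sup x y = sup (c *\<^sub>R x) (c *\<^sub>R y)"
proof (cases "c = 0")
  case True then show ?thesis by simp
next
  case False
  hence c: "0 < c" using assms by simp
  show ?thesis
  proof (rule antisym)
    have "sup x y \<le> inverse c *\<^sub>R sup (c *\<^sub>R x) (c *\<^sub>R y)"
    proof (rule sup_least)
      have "x = inverse c *\<^sub>R (c *\<^sub>R x)" using c by simp
      also have "\<dots> \<le> inverse c *\<^sub>R sup (c *\<^sub>R x) (c *\<^sub>R y)"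
        using c by (intro scaleR_left_mono) auto
      finally show "x \<le> inverse c *\<^sub>R sup (c *\<^sub>R x) (c *\<^sub>R y)" .
      have "y = inverse c *\<^sub>R (c *\<^sub>R y)" using c by simp
      also have "\<dots> \<le> inverse c *\<^sub>R sup (c *\<^sub>R x) (c *\<^sub>R y)"
        using c by (intro scaleR_left_mono) auto
      finally show "y \<le> inverse c *\<^sub>R sup (c *\<^sub>R x) (c *\<^sub>R y)" .
    qed
    hence "c *\<^sub>R sup x y \<le> c *\<^sub>R (inverse c *\<^sub>R sup (c *\<^sub>R x) (c *\<^sub>R y))"
      using c by (intro scaleR_left_mono) auto
    thus "c *\<^sub>R sup x y \<le> sup (c *\<^sub>R x) (c *\<^sub>R y)" using c by simp
    show "sup (c *\<^sub>R x) (c *\<^sub>R y) \<le> c *\<^sub>R sup x y"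
      using assms by (auto intro!: scaleR_left_mono)
  qed
qed

lemma scaleR_inf:
  fixes x y :: "'a::{ordered_real_vector,lattice_ab_group_add}"
  assumes "0 \<le> c" shows "c *\<^sub>R inf x y = inf (c *\<^sub>R x) (c *\<^sub>R y)"
  proof -
  have "inf (c *\<^sub>R x) (c *\<^sub>R y) = - sup (- (c *\<^sub>R x)) (- (c *\<^sub>R y))"
    by (rule inf_eq_neg_sup)
  also have "\<dots> = - (c *\<^sub>R sup (-x) (-y))" using scaleR_sup[OF assms, of "-x" "-y"] by simp
  also have "\<dots> = c *\<^sub>R (- sup (-x) (-y))" by (rule scaleR_minus_right[symmetric])
  also have "\<dots> = c *\<^sub>R inf x y"
  proof -
    have i: "inf x y = - sup (-x) (-y)" by (rule inf_eq_neg_sup)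
    show ?thesis by (simp only: i scaleR_minus_right)
  qed
  finally show ?thesis by simp
qed

lemma scaleR_pprt:
  fixes x :: "'a::{ordered_real_vector,lattice_ab_group_add}"
  assumes "0 \<le> c" shows "pprt (c *\<^sub>R x) = c *\<^sub>R pprt x"
  using scaleR_sup[OF assms, of x 0] by (simp add: pprt_def)

lemma vabs_scaleR:
  fixes x :: "'a::{ordered_real_vector,lattice_ab_group_add}"
  shows "vabs (c *\<^sub>R x) = \<bar>c\<bar> *\<^sub>R vabs x"
proof (cases "0 \<le> c")
  case True then show ?thesis using scaleR_sup[OF True, of x "-x"] by (simp add: vabs_def)
next
  case False
  hence "0 \<le> -c" by simp
  then show ?thesis using scaleR_sup[OF \<open>0 \<le> -c\<close>, of x "-x"] False
    by (simp add: vabs_def sup_commute)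
qed

lemma disj_pprt_diff:
  fixes u v :: "'a::lattice_ab_group_add"
  assumes "inf u v = 0" shows "pprt (u - v) = u"
proof -
  have "sup (u - v) 0 = sup u v + (- v)" using add_sup_distrib_right[of u v "-v"] by simp
  also have "\<dots> = u" using disj_add_sup[OF assms] by (metis add_diff_cancel diff_conv_add_uminus)
  finally show ?thesis by (simp add: pprt_def)
qed

lemma disj_minus_vabs:
  fixes u v :: "'a::lattice_ab_group_add"
  assumes "inf u v = 0" shows "vabs (u - v) = u + v"
proof -
  have a: "pprt (u - v) = u" using disj_pprt_diff[OF assms] .
  have b: "pprt (v - u) = v" using disj_pprt_diff[of v u] assms by (simp add: inf_commute)
  have "vabs (u - v) = pprt (u - v) + pprt (v - u)" using pprt_neg[of "u-v"] by (simp add: vabs_prts)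
  thus ?thesis using a b by simp
qed





lemma arch:
  fixes a b :: "'a::{ordered_real_vector,lattice_ab_group_add,conditionally_complete_lattice}"
  assumes a: "0 \<le> a" and le: "\<And>n::nat. real n *\<^sub>R a \<le> b"
  shows "a = 0"
proof -
  define S where "S = range (\<lambda>n::nat. real n *\<^sub>R a)"
  have bdd: "bdd_above S" unfolding S_def using le by (auto intro!: bdd_aboveI)
  have ne: "S \<noteq> {}" unfolding S_def by auto
  have "real n *\<^sub>R a \<le> Sup S - a" for n
  proof -
    have m: "real (Suc n) *\<^sub>R a \<in> S" unfolding S_def by blast
    have "real (Suc n) *\<^sub>R a \<le> Sup S" using cSup_upper[OF m bdd] .
    thus ?thesis by (simp add: algebra_simps)
  qed
  hence "Sup S \<le> Sup S - a" using ne unfolding S_def by (intro cSup_least) auto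
  hence "a \<le> 0" by simp
  with a show ?thesis by simp
qed

lemma arch_eps:
  fixes a b :: "'a::{ordered_real_vector,lattice_ab_group_add,conditionally_complete_lattice}"
  assumes a: "0 \<le> a" and le: "\<And>\<epsilon>. \<epsilon> > 0 \<Longrightarrow> a \<le> \<epsilon> *\<^sub>R b"
  shows "a = 0"
proof (rule arch[OF a])
  fix n :: nat
  show "real n *\<^sub>R a \<le> b"
  proof (cases "n = 0")
    case True
    have "a \<le> 1 *\<^sub>R b" using le[of 1] by simp
    then show ?thesis using a True by simp
  next
    case False
    hence "a \<le> inverse (real n) *\<^sub>R b" using le[of "inverse (real n)"] by simp
    hence "real n *\<^sub>R a \<le> real n *\<^sub>R (inverse (real n) *\<^sub>R b)" by (intro scaleR_left_mono) auto
    thus ?thesis using False by simp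
  qed
qed

lemma lub_unique: "is_lub_in A S s \<Longrightarrow> is_lub_in A S t \<Longrightarrow> s = t"
  unfolding is_lub_in_def by (meson antisym)

lemma glb_unique: "is_glb_in A S s \<Longrightarrow> is_glb_in A S t \<Longrightarrow> s = t"
  unfolding is_glb_in_def by (meson antisym)

lemma sup_in_eq: "is_lub_in A S s \<Longrightarrow> sup_in A S = s"
  unfolding sup_in_def by (metis lub_unique the_equality)

lemma inf_in_eq: "is_glb_in A S s \<Longrightarrow> inf_in A S = s"
  unfolding inf_in_def by (metis glb_unique the_equality)

lemma linear_onD:
  assumes "linear_on E W" "x \<in> E" "y \<in> E"
  shows "W (x + y) = W x + W y" "W (c *\<^sub>R x) = c *\<^sub>R W x"
  using assms unfolding linear_on_def by auto

locale rs =
  fixes E :: "'a::{ordered_real_vector,lattice_ab_group_add,conditionally_complete_lattice} set"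
    and e :: 'a
  assumes E_riesz: "riesz_subspace E"
    and E_dc: "dedekind_complete_in E"
    and E_dense: "order_dense E"
    and e_unit: "weak_order_unit_in E e"
begin

lemma E_0[simp]: "0 \<in> E" using E_riesz by (simp add: riesz_subspace_def)
lemma E_add[intro]: "x \<in> E \<Longrightarrow> y \<in> E \<Longrightarrow> x + y \<in> E" using E_riesz by (simp add: riesz_subspace_def)
lemma E_scale[intro]: "x \<in> E \<Longrightarrow> c *\<^sub>R x \<in> E" using E_riesz by (simp add: riesz_subspace_def)
lemma E_sup[intro]: "x \<in> E \<Longrightarrow> y \<in> E \<Longrightarrow> sup x y \<in> E" using E_riesz by (simp add: riesz_subspace_def)
lemma E_uminus[intro]: "x \<in> E \<Longrightarrow> - x \<in> E" using E_scale[of x "-1"] by simp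
lemma E_diff[intro]: "x \<in> E \<Longrightarrow> y \<in> E \<Longrightarrow> x - y \<in> E" using E_add E_uminus by (metis diff_conv_add_uminus)
lemma E_inf[intro]: "x \<in> E \<Longrightarrow> y \<in> E \<Longrightarrow> inf x y \<in> E"
  by (metis E_sup E_uminus inf_eq_neg_sup)
lemma E_pprt[intro]: "x \<in> E \<Longrightarrow> pprt x \<in> E" unfolding pprt_def by auto
lemma E_nprt[intro]: "x \<in> E \<Longrightarrow> nprt x \<in> E" unfolding nprt_def by auto
lemma E_vabs[intro]: "x \<in> E \<Longrightarrow> vabs x \<in> E" unfolding vabs_def by auto

lemma e_E[simp]: "e \<in> E" and e_nonneg[simp]: "0 \<le> e"
  using e_unit by (auto simp: weak_order_unit_in_def)

lemma e_unitD: "x \<in> E \<Longrightarrow> inf (vabs x) e = 0 \<Longrightarrow> x = 0"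
  using e_unit by (auto simp: weak_order_unit_in_def)

lemma ideal:
  assumes y: "y \<in> E" and x0: "0 \<le> x" and xy: "x \<le> y"
  shows "x \<in> E"
proof -
  define D where "D = {z\<in>E. 0 \<le> z \<and> z \<le> x}"
  have "D \<subseteq> E" "D \<noteq> {}" "\<forall>z\<in>D. z \<le> y" using x0 xy by (auto simp: D_def)
  with E_dc y obtain s where s: "is_lub_in E D s" unfolding dedekind_complete_in_def by blast
  have sE: "s \<in> E" and ub: "\<And>z. z \<in> D \<Longrightarrow> z \<le> s" and least: "\<And>b. b \<in> E \<Longrightarrow> (\<forall>z\<in>D. z \<le> b) \<Longrightarrow> s \<le> b"
    using s by (auto simp: is_lub_in_def)
  have s0: "0 \<le> s" using ub[of 0] x0 by (auto simp: D_def)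
  have sx: "s \<le> x"
  proof (rule ccontr)
    assume "\<not> s \<le> x"
    hence "pprt (s - x) \<noteq> 0" by (simp add: le_zero_iff_zero_pprt[symmetric])
    hence "0 < pprt (s - x)" by (simp add: order.not_eq_order_implies_strict)
    then obtain u where u: "u \<in> E" "0 < u" "u \<le> pprt (s - x)"
      using E_dense unfolding order_dense_def by blast
    have "s \<le> s - u"
    proof (rule least)
      show "s - u \<in> E" using sE u by auto
      show "\<forall>z\<in>D. z \<le> s - u"
      proof
        fix z assume z: "z \<in> D"
        have "z \<le> inf s x" using ub[OF z] z by (auto simp: D_def)
        also have "inf s x = s - pprt (s - x)"
        proof -
          have "s - pprt (s - x) = s + inf (x - s) 0" unfolding pprt_def diff_sup_eq_inf by simp
          also have "\<dots> = inf x s" by (simp add: add_inf_distrib_left)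
          finally show ?thesis by (simp add: inf_commute)
        qed
        also have "\<dots> \<le> s - u" using u by simp
        finally show "z \<le> s - u" .
      qed
    qed
    thus False using u by simp
  qed
  have xs: "x \<le> s"
  proof (rule ccontr)
    assume "\<not> x \<le> s"
    hence "pprt (x - s) \<noteq> 0" by (simp add: le_zero_iff_zero_pprt[symmetric])
    hence "0 < pprt (x - s)" by (simp add: order.not_eq_order_implies_strict)
    then obtain u where u: "u \<in> E" "0 < u" "u \<le> pprt (x - s)"
      using E_dense unfolding order_dense_def by blast
    have "s + u \<le> s + pprt (x - s)" using u by simp
    also have "s + pprt (x - s) = x"
      using sx by (simp add: pprt_def add_sup_distrib_left sup.absorb1)
    finally have "s + u \<in> D" using sE u s0 by (auto simp: D_def intro: add_nonneg_nonneg)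
    hence "s + u \<le> s" by (rule ub)
    thus False using u by simp
  qed
  from sx xs sE show ?thesis by simp
qed

lemma interval: "a \<in> E \<Longrightarrow> b \<in> E \<Longrightarrow> a \<le> x \<Longrightarrow> x \<le> b \<Longrightarrow> x \<in> E"
  using ideal[of "b - a" "x - a"] by (metis E_add E_diff diff_add_cancel diff_ge_0_iff_ge diff_right_mono)

lemma bounded: "y \<in> E \<Longrightarrow> vabs x \<le> y \<Longrightarrow> x \<in> E"
  using interval[of "-y" y x] by (auto simp: vabs_le_iff minus_le_iff)

lemma Sup_in_E:
  assumes "S \<subseteq> E" "S \<noteq> {}" "b \<in> E" "\<And>x. x \<in> S \<Longrightarrow> x \<le> b"
  shows "Sup S \<in> E" "is_lub_in E S (Sup S)" "bdd_above S"
proof -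
  show bdd: "bdd_above S" unfolding bdd_above_def using assms by blast
  obtain x0 where "x0 \<in> S" using assms by auto
  hence "x0 \<le> Sup S" "Sup S \<le> b" using bdd assms by (auto intro: cSup_upper cSup_least)
  thus "Sup S \<in> E" using interval[of x0 b] \<open>x0 \<in> S\<close> assms by auto
  thus "is_lub_in E S (Sup S)" using bdd assms unfolding is_lub_in_def
    by (auto intro: cSup_upper cSup_least)
qed

lemma Inf_in_E:
  assumes "S \<subseteq> E" "S \<noteq> {}" "b \<in> E" "\<And>x. x \<in> S \<Longrightarrow> b \<le> x"
  shows "Inf S \<in> E" "is_glb_in E S (Inf S)" "bdd_below S"
proof -
  show bdd: "bdd_below S" unfolding bdd_below_def using assms by blast
  obtain x0 where "x0 \<in> S" using assms by auto
  hence "Inf S \<le> x0" "b \<le> Inf S" using bdd assms by (auto intro: cInf_lower cInf_greatest)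
  thus "Inf S \<in> E" using interval[of b x0] \<open>x0 \<in> S\<close> assms by auto
  thus "is_glb_in E S (Inf S)" using bdd assms unfolding is_glb_in_def
    by (auto intro: cInf_lower cInf_greatest)
qed

lemma chain_sup:
  assumes x: "x \<in> E" "0 \<le> x" and a: "a \<in> E" "0 \<le> a"
  defines "D \<equiv> range (\<lambda>n::nat. inf x (real n *\<^sub>R a))"
  shows "D \<subseteq> E" "D \<noteq> {}" "\<And>z. z \<in> D \<Longrightarrow> z \<le> x" "\<And>z. z \<in> D \<Longrightarrow> 0 \<le> z" "up_directed D"
    "Sup D \<in> E" "0 \<le> Sup D" "Sup D \<le> x" "inf (x - Sup D) a = 0"
proof -
  show DE: "D \<subseteq> E" unfolding D_def using x a by auto
  show ne: "D \<noteq> {}" unfolding D_def by auto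
  show ub: "\<And>z. z \<in> D \<Longrightarrow> z \<le> x" unfolding D_def by auto
  show nn: "\<And>z. z \<in> D \<Longrightarrow> 0 \<le> z" unfolding D_def using x a by (auto simp: scaleR_nonneg_nonneg)
  have mono: "inf x (real n *\<^sub>R a) \<le> inf x (real k *\<^sub>R a)" if "n \<le> k" for n k
  proof -
    have "real n *\<^sub>R a \<le> real k *\<^sub>R a" using that a by (intro scaleR_right_mono) auto
    thus ?thesis by (rule inf_mono[OF order_refl])
  qed
  show "up_directed D" unfolding up_directed_def D_def
  proof (intro ballI)
    fix u v assume "u \<in> range (\<lambda>n::nat. inf x (real n *\<^sub>R a))" "v \<in> range (\<lambda>n::nat. inf x (real n *\<^sub>R a))"
    then obtain n k where "u = inf x (real n *\<^sub>R a)" "v = inf x (real k *\<^sub>R a)" by auto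
    thus "\<exists>z\<in>range (\<lambda>n::nat. inf x (real n *\<^sub>R a)). u \<le> z \<and> v \<le> z"
      using mono[of n "max n k"] mono[of k "max n k"] by auto
  qed
  have S: "Sup D \<in> E" "is_lub_in E D (Sup D)" "bdd_above D" using Sup_in_E[OF DE ne x(1) ub] by auto
  show "Sup D \<in> E" by fact
  have up: "z \<le> Sup D" if "z \<in> D" for z using cSup_upper[OF that S(3)] .
  have "inf x (real 0 *\<^sub>R a) \<in> D" unfolding D_def by blast
  hence "inf x (real 0 *\<^sub>R a) \<le> Sup D" by (rule up)
  thus s0: "0 \<le> Sup D" using x by (simp add: inf_absorb2)
  show sx: "Sup D \<le> x" using ne ub by (intro cSup_least) auto
  define v where "v = inf (x - Sup D) a"
  have v0: "0 \<le> v" unfolding v_def using sx a by auto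
  have "inf x (real n *\<^sub>R a) \<le> Sup D - v" for n
  proof -
    have "v \<le> x - Sup D" "v \<le> a" unfolding v_def by auto
    have "inf x (real n *\<^sub>R a) + v \<le> x"
    proof -
      have "inf x (real n *\<^sub>R a) \<le> Sup D" by (rule up) (auto simp: D_def)
      hence "inf x (real n *\<^sub>R a) + v \<le> Sup D + (x - Sup D)"
        using add_mono \<open>v \<le> x - Sup D\<close> by blast
      thus ?thesis by simp
    qed
    moreover have "inf x (real n *\<^sub>R a) + v \<le> real (Suc n) *\<^sub>R a"
      using add_mono[OF inf.cobounded2[of x "real n *\<^sub>R a"] \<open>v \<le> a\<close>] by (simp add: algebra_simps)
    ultimately have "inf x (real n *\<^sub>R a) + v \<le> inf x (real (Suc n) *\<^sub>R a)" by simp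
    also have "\<dots> \<le> Sup D" by (rule up) (unfold D_def, blast)
    finally show ?thesis by (simp add: algebra_simps)
  qed
  hence "Sup D \<le> Sup D - v" using ne unfolding D_def by (intro cSup_least) auto
  hence "v \<le> 0" by simp
  hence "v = 0" using v0 by (rule antisym)
  thus "inf (x - Sup D) a = 0" unfolding v_def .
qed

end



lemma vdisj_sym: "vdisj x y \<longleftrightarrow> vdisj y x"
  by (simp add: vdisj_def inf_commute)

lemma vdisj_self: "vdisj x x \<Longrightarrow> x = 0"
  by (simp add: vdisj_def vabs_eq_0)

lemma vdisj_0[simp]: "vdisj 0 x"
  by (simp add: vdisj_def inf_absorb1)

lemma vdisj_solid: "vabs x \<le> vabs y \<Longrightarrow> vdisj y z \<Longrightarrow> vdisj x z"
proof -
  assume a: "vabs x \<le> vabs y" "vdisj y z"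
  have "inf (vabs x) (vabs z) \<le> inf (vabs y) (vabs z)" by (rule inf_mono[OF a(1) order_refl])
  moreover have "inf (vabs y) (vabs z) = 0" using a(2) unfolding vdisj_def .
  ultimately have "inf (vabs x) (vabs z) \<le> 0" by simp
  moreover have "0 \<le> inf (vabs x) (vabs z)" by simp
  ultimately show ?thesis unfolding vdisj_def by (rule antisym)
qed

lemma vdisj_add:
  assumes "vdisj x z" "vdisj y z" shows "vdisj (x + y) z"
proof -
  have "inf (vabs (x + y)) (vabs z) \<le> inf (vabs x + vabs y) (vabs z)"
    by (rule inf_mono[OF vabs_triangle order_refl])
  also have "\<dots> \<le> inf (vabs x) (vabs z) + inf (vabs y) (vabs z)"
    using inf_sub_additive[of "vabs z" "vabs x" "vabs y"] by (simp add: inf_commute)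
  also have "\<dots> = 0" using assms by (simp add: vdisj_def)
  finally show ?thesis unfolding vdisj_def by (simp add: antisym)
qed

lemma vdisj_uminus: "vdisj x z \<Longrightarrow> vdisj (- x) z"
  by (simp add: vdisj_def)

lemma vdisj_diff: "vdisj x z \<Longrightarrow> vdisj y z \<Longrightarrow> vdisj (x - y) z"
  by (metis diff_conv_add_uminus vdisj_add vdisj_uminus)

lemma vdisj_scale:
  fixes x :: "'a::{ordered_real_vector,lattice_ab_group_add}"
  assumes "vdisj x z" shows "vdisj (c *\<^sub>R x) z"
proof -
  define K where "K = max \<bar>c\<bar> 1"
  have K: "0 \<le> K" "\<bar>c\<bar> \<le> K" "1 \<le> K" unfolding K_def by auto
  have "inf (vabs (c *\<^sub>R x)) (vabs z) \<le> inf (K *\<^sub>R vabs x) (K *\<^sub>R vabs z)"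
  proof (rule inf_mono)
    show "vabs (c *\<^sub>R x) \<le> K *\<^sub>R vabs x" unfolding vabs_scaleR using K by (intro scaleR_right_mono) auto
    show "vabs z \<le> K *\<^sub>R vabs z" using scaleR_right_mono[OF K(3) vabs_nonneg[of z]] by simp
  qed
  also have "\<dots> = K *\<^sub>R inf (vabs x) (vabs z)" by (rule scaleR_inf[OF K(1), symmetric])
  also have "\<dots> = 0" using assms by (simp add: vdisj_def)
  finally show ?thesis unfolding vdisj_def by (simp add: antisym)
qed

lemma vdisj_pos: "0 \<le> x \<Longrightarrow> 0 \<le> y \<Longrightarrow> vdisj x y \<longleftrightarrow> inf x y = 0"
  by (simp add: vdisj_def)

context rs begin

lemma band_props:
  assumes "band_in E B"
  shows "B \<subseteq> E" "0 \<in> B" "\<And>x y. x \<in> B \<Longrightarrow> y \<in> B \<Longrightarrow> x + y \<in> B"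
    "\<And>x c. x \<in> B \<Longrightarrow> c *\<^sub>R x \<in> B" "\<And>x y. x \<in> B \<Longrightarrow> y \<in> B \<Longrightarrow> x - y \<in> B"
    "\<And>x y. x \<in> E \<Longrightarrow> y \<in> B \<Longrightarrow> vabs x \<le> vabs y \<Longrightarrow> x \<in> B"
proof -
  show "B \<subseteq> E" "0 \<in> B" "\<And>x y. x \<in> B \<Longrightarrow> y \<in> B \<Longrightarrow> x + y \<in> B"
    "\<And>x c. x \<in> B \<Longrightarrow> c *\<^sub>R x \<in> B" "\<And>x y. x \<in> E \<Longrightarrow> y \<in> B \<Longrightarrow> vabs x \<le> vabs y \<Longrightarrow> x \<in> B"
    using assms by (auto simp: band_in_def riesz_subspace_def)
  fix x y assume "x \<in> B" "y \<in> B"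
  thus "x - y \<in> B" using assms unfolding band_in_def riesz_subspace_def
    by (metis diff_conv_add_uminus scaleR_minus1_left)
qed

lemma dc_props:
  shows "disj_compl E B \<subseteq> E" "0 \<in> disj_compl E B"
    "\<And>x y. x \<in> disj_compl E B \<Longrightarrow> y \<in> disj_compl E B \<Longrightarrow> x + y \<in> disj_compl E B"
    "\<And>x c. x \<in> disj_compl E B \<Longrightarrow> c *\<^sub>R x \<in> disj_compl E B"
    "\<And>x y. x \<in> disj_compl E B \<Longrightarrow> y \<in> disj_compl E B \<Longrightarrow> x - y \<in> disj_compl E B"
    "\<And>x y. x \<in> E \<Longrightarrow> y \<in> disj_compl E B \<Longrightarrow> vabs x \<le> vabs y \<Longrightarrow> x \<in> disj_compl E B"
    "\<And>x y. x \<in> disj_compl E B \<Longrightarrow> y \<in> B \<Longrightarrow> vdisj x y"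
proof -
  show "disj_compl E B \<subseteq> E" unfolding disj_compl_def by blast
  show "0 \<in> disj_compl E B" unfolding disj_compl_def by simp
  show "\<And>x y. x \<in> disj_compl E B \<Longrightarrow> y \<in> disj_compl E B \<Longrightarrow> x + y \<in> disj_compl E B"
    unfolding disj_compl_def using vdisj_add by blast
  show "\<And>x c. x \<in> disj_compl E B \<Longrightarrow> c *\<^sub>R x \<in> disj_compl E B"
    unfolding disj_compl_def using vdisj_scale by blast
  show "\<And>x y. x \<in> disj_compl E B \<Longrightarrow> y \<in> disj_compl E B \<Longrightarrow> x - y \<in> disj_compl E B"
    unfolding disj_compl_def using vdisj_diff by blast
  show "\<And>x y. x \<in> E \<Longrightarrow> y \<in> disj_compl E B \<Longrightarrow> vabs x \<le> vabs y \<Longrightarrow> x \<in> disj_compl E B"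
    unfolding disj_compl_def using vdisj_solid by blast
  show "\<And>x y. x \<in> disj_compl E B \<Longrightarrow> y \<in> B \<Longrightarrow> vdisj x y"
    unfolding disj_compl_def by blast
qed

definition bpB :: "('a \<Rightarrow> 'a) \<Rightarrow> 'a set \<Rightarrow> bool" where
  "bpB P B \<longleftrightarrow> band_in E B \<and> (\<forall>x\<in>E. P x \<in> B \<and> x - P x \<in> disj_compl E B)"

lemma bp_obtain:
  assumes "band_projection E P" obtains B where "bpB P B"
  using assms unfolding band_projection_def bpB_def by blast

lemma bpB_unique:
  assumes P: "bpB P B" and x: "x \<in> E" and b: "b \<in> B" and c: "c \<in> disj_compl E B" and xbc: "x = b + c"
  shows "P x = b"
proof -
  have band: "band_in E B" and Px: "P x \<in> B" "x - P x \<in> disj_compl E B" using P x by (auto simp: bpB_def)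
  have inB: "P x - b \<in> B" using band_props(5)[OF band Px(1) b] .
  have eq: "P x - b = c - (x - P x)" using xbc by (simp add: algebra_simps)
  have inC: "P x - b \<in> disj_compl E B" unfolding eq by (rule dc_props(5)[OF c Px(2)])
  have "vdisj (P x - b) (P x - b)" by (rule dc_props(7)[OF inC inB])
  hence "P x - b = 0" by (rule vdisj_self)
  thus ?thesis by simp
qed

lemma bp_facts:
  assumes "band_projection E P"
  shows bp_E: "\<And>x. x \<in> E \<Longrightarrow> P x \<in> E"
    and bp_add: "\<And>x y. x \<in> E \<Longrightarrow> y \<in> E \<Longrightarrow> P (x + y) = P x + P y"
    and bp_scale: "\<And>x c. x \<in> E \<Longrightarrow> P (c *\<^sub>R x) = c *\<^sub>R P x"
    and bp_idem: "\<And>x. x \<in> E \<Longrightarrow> P (P x) = P x"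
    and bp_compl: "\<And>x. x \<in> E \<Longrightarrow> P (x - P x) = 0"
    and bp_pos: "\<And>x. x \<in> E \<Longrightarrow> 0 \<le> x \<Longrightarrow> 0 \<le> P x"
    and bp_le: "\<And>x. x \<in> E \<Longrightarrow> 0 \<le> x \<Longrightarrow> P x \<le> x"
    and bp_disj: "\<And>x y. x \<in> E \<Longrightarrow> y \<in> E \<Longrightarrow> vdisj (P x) (y - P y)"
proof -
  obtain B where P: "bpB P B" using assms by (rule bp_obtain)
  have band: "band_in E B" and PB: "\<And>x. x \<in> E \<Longrightarrow> P x \<in> B" and PC: "\<And>x. x \<in> E \<Longrightarrow> x - P x \<in> disj_compl E B"
    using P by (auto simp: bpB_def)
  note BE = band_props(1)[OF band]
  show PE: "\<And>x. x \<in> E \<Longrightarrow> P x \<in> E" using PB BE by auto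
  show "\<And>x y. x \<in> E \<Longrightarrow> y \<in> E \<Longrightarrow> P (x + y) = P x + P y"
  proof -
    fix x y assume "x \<in> E" "y \<in> E"
    show "P (x + y) = P x + P y"
    proof (rule bpB_unique[OF P, where c = "(x - P x) + (y - P y)"])
      show "x + y \<in> E" using \<open>x \<in> E\<close> \<open>y \<in> E\<close> by blast
      show "P x + P y \<in> B" by (rule band_props(3)[OF band PB PB]) fact+
      show "x - P x + (y - P y) \<in> disj_compl E B" by (rule dc_props(3)[OF PC PC]) fact+
    qed (simp add: algebra_simps)
  qed
  show "\<And>x c. x \<in> E \<Longrightarrow> P (c *\<^sub>R x) = c *\<^sub>R P x"
  proof -
    fix x c assume "x \<in> E"
    show "P (c *\<^sub>R x) = c *\<^sub>R P x"
    proof (rule bpB_unique[OF P, where c = "c *\<^sub>R (x - P x)"])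
      show "c *\<^sub>R x \<in> E" using \<open>x \<in> E\<close> by blast
      show "c *\<^sub>R P x \<in> B" by (rule band_props(4)[OF band PB]) fact
      show "c *\<^sub>R (x - P x) \<in> disj_compl E B" by (rule dc_props(4)[OF PC]) fact
    qed (simp add: scaleR_diff_right)
  qed
  show idem: "\<And>x. x \<in> E \<Longrightarrow> P (P x) = P x"
  proof -
    fix x assume "x \<in> E"
    show "P (P x) = P x"
      by (rule bpB_unique[OF P, where c = 0]) (use \<open>x \<in> E\<close> PB PE dc_props(2) in simp_all)
  qed
  show "\<And>x. x \<in> E \<Longrightarrow> P (x - P x) = 0"
  proof -
    fix x assume "x \<in> E"
    show "P (x - P x) = 0"
      by (rule bpB_unique[OF P, where c = "x - P x"]) (use \<open>x \<in> E\<close> PC PE band_props(2)[OF band] in auto)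
  qed
  show disj: "\<And>x y. x \<in> E \<Longrightarrow> y \<in> E \<Longrightarrow> vdisj (P x) (y - P y)"
    using PB PC dc_props(7) vdisj_sym by metis
  show pos: "\<And>x. x \<in> E \<Longrightarrow> 0 \<le> x \<Longrightarrow> 0 \<le> P x"
  proof -
    fix x assume x: "x \<in> E" "0 \<le> x"
    define a where "a = P x"
    define c where "c = x - P x"
    have d: "inf (vabs a) (vabs c) = 0" using disj[OF x(1) x(1)] unfolding a_def c_def vdisj_def .
    have "- nprt a \<le> vabs a" by (rule nprt_le_vabs)
    moreover have "- nprt a \<le> vabs c"
    proof -
      have "- a \<le> c" using x unfolding a_def c_def by simp
      hence 1: "sup (-a) 0 \<le> sup c 0" by (rule sup_mono) simp
      have 2: "- nprt a = sup (-a) 0" unfolding nprt_def by (simp add: neg_inf_eq_sup)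
      have 3: "sup c 0 \<le> vabs c" using pprt_le_vabs[of c] unfolding pprt_def .
      show ?thesis unfolding 2 using 1 3 by (rule order_trans)
    qed
    ultimately have "- nprt a \<le> inf (vabs a) (vabs c)" by (rule le_infI)
    hence "- nprt a \<le> 0" using d by simp
    hence "nprt a = 0" by (simp add: antisym)
    thus "0 \<le> P x" unfolding a_def by (simp add: zero_le_iff_zero_nprt)
  qed
  show "\<And>x. x \<in> E \<Longrightarrow> 0 \<le> x \<Longrightarrow> P x \<le> x"
  proof -
    fix x assume x: "x \<in> E" "0 \<le> x"
    define a where "a = x - P x"
    define c where "c = P x"
    have d: "inf (vabs a) (vabs c) = 0" using disj[OF x(1) x(1)] unfolding a_def c_def vdisj_def
      by (simp add: inf_commute)
    have "- nprt a \<le> vabs a" by (rule nprt_le_vabs)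
    moreover have "- nprt a \<le> vabs c"
    proof -
      have "- a \<le> c" using x unfolding a_def c_def by simp
      hence 1: "sup (-a) 0 \<le> sup c 0" by (rule sup_mono) simp
      have 2: "- nprt a = sup (-a) 0" unfolding nprt_def by (simp add: neg_inf_eq_sup)
      have 3: "sup c 0 \<le> vabs c" using pprt_le_vabs[of c] unfolding pprt_def .
      show ?thesis unfolding 2 using 1 3 by (rule order_trans)
    qed
    ultimately have "- nprt a \<le> inf (vabs a) (vabs c)" by (rule le_infI)
    hence "- nprt a \<le> 0" using d by simp
    hence "nprt a = 0" by (simp add: antisym)
    hence "0 \<le> x - P x" unfolding a_def by (simp only: zero_le_iff_zero_nprt)
    thus "P x \<le> x" by simp
  qed
qed

end



lemma up_directed_image:
  assumes "up_directed D" "\<And>x y. x \<in> D \<Longrightarrow> y \<in> D \<Longrightarrow> x \<le> y \<Longrightarrow> f x \<le> f y"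
  shows "up_directed (f ` D)"
  unfolding up_directed_def
proof (intro ballI)
  fix u v assume "u \<in> f ` D" "v \<in> f ` D"
  then obtain a b where ab: "a \<in> D" "b \<in> D" "u = f a" "v = f b" by blast
  then obtain c where c: "c \<in> D" "a \<le> c" "b \<le> c" using assms(1) unfolding up_directed_def by blast
  show "\<exists>z\<in>f ` D. u \<le> z \<and> v \<le> z"
  proof (rule bexI[of _ "f c"])
    show "f c \<in> f ` D" using c(1) by (rule imageI)
    show "u \<le> f c \<and> v \<le> f c" using assms(2) ab c by simp
  qed
qed

lemma nonneg_sum_le_0:
  fixes a b :: "'a::ordered_ab_group_add"
  assumes "0 \<le> a" "0 \<le> b" "a + b \<le> 0" shows "a = 0"
proof -
  have "a \<le> a + b" using assms by (simp add: add_increasing2)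
  hence "a \<le> 0" using assms(3) by (rule order_trans)
  thus ?thesis using assms(1) by (rule antisym)
qed

context rs begin

lemma bp_more:
  assumes P: "band_projection E P"
  shows bp_0: "P 0 = 0"
    and bp_diff: "\<And>x y. x \<in> E \<Longrightarrow> y \<in> E \<Longrightarrow> P (x - y) = P x - P y"
    and bp_uminus: "\<And>x. x \<in> E \<Longrightarrow> P (- x) = - P x"
    and bp_mono: "\<And>x y. x \<in> E \<Longrightarrow> y \<in> E \<Longrightarrow> x \<le> y \<Longrightarrow> P x \<le> P y"
    and bp_cmono: "\<And>x y. x \<in> E \<Longrightarrow> y \<in> E \<Longrightarrow> x \<le> y \<Longrightarrow> x - P x \<le> y - P y"
    and bp_in: "\<And>y z. y \<in> E \<Longrightarrow> z \<in> E \<Longrightarrow> vabs y \<le> vabs (P z) \<Longrightarrow> P y = y"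
    and bp_out: "\<And>y z. y \<in> E \<Longrightarrow> z \<in> E \<Longrightarrow> vabs y \<le> vabs (z - P z) \<Longrightarrow> P y = 0"
proof -
  note f = bp_facts[OF P]
  show p0: "P 0 = 0" using f(3)[of 0 0] by simp
  show sc: "\<And>x. x \<in> E \<Longrightarrow> P (- x) = - P x" using f(3)[of _ "-1"] by simp
  show df: "\<And>x y. x \<in> E \<Longrightarrow> y \<in> E \<Longrightarrow> P (x - y) = P x - P y"
  proof -
    fix x y assume xy: "x \<in> E" "y \<in> E"
    have "P (x - y) = P (x + - y)" by simp
    also have "\<dots> = P x + P (- y)" using f(2)[OF xy(1) E_uminus[OF xy(2)]] .
    also have "\<dots> = P x - P y" using sc[OF xy(2)] by simp
    finally show "P (x - y) = P x - P y" .
  qed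
  show "\<And>x y. x \<in> E \<Longrightarrow> y \<in> E \<Longrightarrow> x \<le> y \<Longrightarrow> P x \<le> P y"
  proof -
    fix x y assume "x \<in> E" "y \<in> E" "x \<le> y"
    hence "0 \<le> P (y - x)" using f(6)[of "y - x"] by auto
    thus "P x \<le> P y" using df \<open>x \<in> E\<close> \<open>y \<in> E\<close> by simp
  qed
  show "\<And>x y. x \<in> E \<Longrightarrow> y \<in> E \<Longrightarrow> x \<le> y \<Longrightarrow> x - P x \<le> y - P y"
  proof -
    fix x y assume "x \<in> E" "y \<in> E" "x \<le> y"
    hence "P (y - x) \<le> y - x" using f(7)[of "y - x"] by auto
    thus "x - P x \<le> y - P y" using df \<open>x \<in> E\<close> \<open>y \<in> E\<close> by (simp add: algebra_simps)
  qed
  obtain B where PB: "bpB P B" using P by (rule bp_obtain)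
  have band: "band_in E B" and PBx: "\<And>x. x \<in> E \<Longrightarrow> P x \<in> B" and PC: "\<And>x. x \<in> E \<Longrightarrow> x - P x \<in> disj_compl E B"
    using PB by (auto simp: bpB_def)
  show "\<And>y z. y \<in> E \<Longrightarrow> z \<in> E \<Longrightarrow> vabs y \<le> vabs (P z) \<Longrightarrow> P y = y"
  proof -
    fix y z assume yz: "y \<in> E" "z \<in> E" "vabs y \<le> vabs (P z)"
    have "y \<in> B" using band_props(6)[OF band yz(1) PBx[OF yz(2)] yz(3)] .
    thus "P y = y" using bpB_unique[OF PB yz(1), of y 0] dc_props(2) by simp
  qed
  show "\<And>y z. y \<in> E \<Longrightarrow> z \<in> E \<Longrightarrow> vabs y \<le> vabs (z - P z) \<Longrightarrow> P y = 0"
  proof -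
    fix y z assume yz: "y \<in> E" "z \<in> E" "vabs y \<le> vabs (z - P z)"
    have "y \<in> disj_compl E B" using dc_props(6)[OF yz(1) PC[OF yz(2)] yz(3)] .
    thus "P y = 0" using bpB_unique[OF PB yz(1), of 0 y] band_props(2)[OF band] by simp
  qed
qed

lemma bp_oc_up:
  assumes P: "band_projection E P" and D: "D \<subseteq> E" "D \<noteq> {}" "up_directed D"
    and b: "b \<in> E" "\<And>d. d \<in> D \<Longrightarrow> d \<le> b"
  shows "P (Sup D) = Sup (P ` D)"
proof -
  note f = bp_facts[OF P] and g = bp_more[OF P]
  have S: "Sup D \<in> E" "bdd_above D" using Sup_in_E[OF D(1,2) b] by auto
  have sup_ub: "\<And>d. d \<in> D \<Longrightarrow> d \<le> Sup D" using cSup_upper S(2) by blast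
  define t where "t = Sup (P ` D)"
  define t' where "t' = Sup ((\<lambda>d. d - P d) ` D)"
  have PD: "P ` D \<subseteq> E" using D f(1) by auto
  have ubP: "x \<le> P b" if xD: "x \<in> P ` D" for x
  proof -
    obtain d where "d \<in> D" "x = P d" using xD by blast
    thus ?thesis using g(4)[of d b] D(1) b by auto
  qed
  have neP: "P ` D \<noteq> {}" using D(2) by simp
  have T: "t \<in> E" "bdd_above (P ` D)"
    using Sup_in_E[OF PD neP f(1)[OF b(1)] ubP] unfolding t_def by auto
  have CD: "(\<lambda>d. d - P d) ` D \<subseteq> E" using D f(1) by auto
  have ubC: "x \<le> b - P b" if xD: "x \<in> (\<lambda>d. d - P d) ` D" for x
  proof -
    obtain d where "d \<in> D" "x = d - P d" using xD by blast
    thus ?thesis using g(5)[of d b] D(1) b by auto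
  qed
  have neC: "(\<lambda>d. d - P d) ` D \<noteq> {}" using D(2) by simp
  have T': "t' \<in> E" "bdd_above ((\<lambda>d. d - P d) ` D)"
    using Sup_in_E[OF CD neC E_diff[OF b(1) f(1)[OF b(1)]] ubC] unfolding t'_def by auto
  have 1: "t \<le> P (Sup D)" unfolding t_def using D g(4) sup_ub S(1) by (intro cSup_least) auto
  have 2: "t' \<le> Sup D - P (Sup D)" unfolding t'_def using D g(5) sup_ub S(1) by (intro cSup_least) auto
  have 3: "Sup D \<le> t + t'"
  proof (rule cSup_least[OF D(2)])
    fix d assume d: "d \<in> D"
    have "P d \<le> t" unfolding t_def using T(2) d by (intro cSup_upper) auto
    moreover have "d - P d \<le> t'" unfolding t'_def using T'(2) d by (intro cSup_upper) auto
    ultimately have "P d + (d - P d) \<le> t + t'" by (rule add_mono)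
    thus "d \<le> t + t'" by simp
  qed
  have "P (Sup D) - t = 0"
  proof (rule nonneg_sum_le_0)
    show "0 \<le> P (Sup D) - t" using 1 by simp
    show "0 \<le> (Sup D - P (Sup D)) - t'" using 2 by simp
    show "P (Sup D) - t + (Sup D - P (Sup D) - t') \<le> 0" using 3 by (simp add: algebra_simps)
  qed
  thus ?thesis unfolding t_def by simp
qed

lemma ce_facts:
  assumes W: "cond_exp E W"
  shows ce_E: "\<And>x. x \<in> E \<Longrightarrow> W x \<in> E"
    and ce_add: "\<And>x y. x \<in> E \<Longrightarrow> y \<in> E \<Longrightarrow> W (x + y) = W x + W y"
    and ce_scale: "\<And>x c. x \<in> E \<Longrightarrow> W (c *\<^sub>R x) = c *\<^sub>R W x"
    and ce_0: "W 0 = 0"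
    and ce_uminus: "\<And>x. x \<in> E \<Longrightarrow> W (- x) = - W x"
    and ce_diff: "\<And>x y. x \<in> E \<Longrightarrow> y \<in> E \<Longrightarrow> W (x - y) = W x - W y"
    and ce_pos: "\<And>x. x \<in> E \<Longrightarrow> 0 \<le> x \<Longrightarrow> 0 \<le> W x"
    and ce_mono: "\<And>x y. x \<in> E \<Longrightarrow> y \<in> E \<Longrightarrow> x \<le> y \<Longrightarrow> W x \<le> W y"
    and ce_idem: "\<And>x. x \<in> E \<Longrightarrow> W (W x) = W x"
    and ce_rng: "\<And>y. y \<in> W ` E \<Longrightarrow> W y = y"
    and rng_E: "\<And>y. y \<in> W ` E \<Longrightarrow> y \<in> E"
    and rng_add: "\<And>x y. x \<in> W ` E \<Longrightarrow> y \<in> W ` E \<Longrightarrow> x + y \<in> W ` E"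
    and rng_scale: "\<And>x c. x \<in> W ` E \<Longrightarrow> c *\<^sub>R x \<in> W ` E"
    and rng_sup: "\<And>x y. x \<in> W ` E \<Longrightarrow> y \<in> W ` E \<Longrightarrow> sup x y \<in> W ` E"
proof -
  have WE: "W ` E \<subseteq> E" and lin: "linear_on E W" and pos: "positive_on E W"
    and idem: "\<forall>x\<in>E. W (W x) = W x" and rs: "riesz_subspace (W ` E)"
    using W by (auto simp: cond_exp_def)
  show WEx: "\<And>x. x \<in> E \<Longrightarrow> W x \<in> E" using WE by auto
  show add: "\<And>x y. x \<in> E \<Longrightarrow> y \<in> E \<Longrightarrow> W (x + y) = W x + W y" using lin by (simp add: linear_on_def)
  show sc: "\<And>x c. x \<in> E \<Longrightarrow> W (c *\<^sub>R x) = c *\<^sub>R W x" using lin by (simp add: linear_on_def)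
  show "W 0 = 0" using sc[of 0 0] by simp
  show um: "\<And>x. x \<in> E \<Longrightarrow> W (- x) = - W x" using sc[of _ "-1"] by simp
  show df: "\<And>x y. x \<in> E \<Longrightarrow> y \<in> E \<Longrightarrow> W (x - y) = W x - W y"
  proof -
    fix x y assume xy: "x \<in> E" "y \<in> E"
    have "W (x - y) = W (x + - y)" by simp
    also have "\<dots> = W x + W (- y)" using add[OF xy(1) E_uminus[OF xy(2)]] .
    also have "\<dots> = W x - W y" using um[OF xy(2)] by simp
    finally show "W (x - y) = W x - W y" .
  qed
  show ps: "\<And>x. x \<in> E \<Longrightarrow> 0 \<le> x \<Longrightarrow> 0 \<le> W x" using pos by (simp add: positive_on_def)
  show "\<And>x y. x \<in> E \<Longrightarrow> y \<in> E \<Longrightarrow> x \<le> y \<Longrightarrow> W x \<le> W y"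
  proof -
    fix x y assume "x \<in> E" "y \<in> E" "x \<le> y"
    hence "0 \<le> W (y - x)" using ps[of "y - x"] by auto
    thus "W x \<le> W y" using df \<open>x \<in> E\<close> \<open>y \<in> E\<close> by simp
  qed
  show "\<And>x. x \<in> E \<Longrightarrow> W (W x) = W x" using idem by auto
  show "\<And>y. y \<in> W ` E \<Longrightarrow> W y = y" using idem by auto
  show "\<And>y. y \<in> W ` E \<Longrightarrow> y \<in> E" using WE by auto
  show "\<And>x y. x \<in> W ` E \<Longrightarrow> y \<in> W ` E \<Longrightarrow> x + y \<in> W ` E"
    using rs unfolding riesz_subspace_def by blast
  show "\<And>x c. x \<in> W ` E \<Longrightarrow> c *\<^sub>R x \<in> W ` E"
    using rs unfolding riesz_subspace_def by blast
  show "\<And>x y. x \<in> W ` E \<Longrightarrow> y \<in> W ` E \<Longrightarrow> sup x y \<in> W ` E"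
    using rs unfolding riesz_subspace_def by blast
qed

lemma rng_more:
  assumes W: "cond_exp E W"
  shows rng_uminus: "\<And>x. x \<in> W ` E \<Longrightarrow> - x \<in> W ` E"
    and rng_diff: "\<And>x y. x \<in> W ` E \<Longrightarrow> y \<in> W ` E \<Longrightarrow> x - y \<in> W ` E"
    and rng_inf: "\<And>x y. x \<in> W ` E \<Longrightarrow> y \<in> W ` E \<Longrightarrow> inf x y \<in> W ` E"
    and rng_0: "0 \<in> W ` E"
    and rng_pprt: "\<And>x. x \<in> W ` E \<Longrightarrow> pprt x \<in> W ` E"
    and rng_nprt: "\<And>x. x \<in> W ` E \<Longrightarrow> nprt x \<in> W ` E"
    and rng_vabs: "\<And>x. x \<in> W ` E \<Longrightarrow> vabs x \<in> W ` E"
proof -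
  note f = ce_facts[OF W]
  show um: "\<And>x. x \<in> W ` E \<Longrightarrow> - x \<in> W ` E" using f(13)[of _ "-1"] by simp
  show "\<And>x y. x \<in> W ` E \<Longrightarrow> y \<in> W ` E \<Longrightarrow> x - y \<in> W ` E"
  proof -
    fix x y assume "x \<in> W ` E" "y \<in> W ` E"
    hence "x + - y \<in> W ` E" by (intro um f(12))
    thus "x - y \<in> W ` E" by simp
  qed
  show inf: "\<And>x y. x \<in> W ` E \<Longrightarrow> y \<in> W ` E \<Longrightarrow> inf x y \<in> W ` E"
  proof -
    fix x y assume "x \<in> W ` E" "y \<in> W ` E"
    hence "- sup (- x) (- y) \<in> W ` E" by (intro um f(14))
    thus "inf x y \<in> W ` E" by (simp only: inf_eq_neg_sup[symmetric])
  qed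
  show z: "0 \<in> W ` E"
  proof -
    have "W 0 \<in> W ` E" using E_0 by (rule imageI)
    thus ?thesis using f(4) by simp
  qed
  show "\<And>x. x \<in> W ` E \<Longrightarrow> pprt x \<in> W ` E" unfolding pprt_def by (intro f(14) z)
  show "\<And>x. x \<in> W ` E \<Longrightarrow> nprt x \<in> W ` E" unfolding nprt_def by (intro inf z)
  show "\<And>x. x \<in> W ` E \<Longrightarrow> vabs x \<in> W ` E" unfolding vabs_def by (intro f(14) um)
qed

lemma ce_oc_up:
  assumes W: "cond_exp E W" and D: "D \<subseteq> E" "D \<noteq> {}" "up_directed D"
    and b: "b \<in> E" "\<And>d. d \<in> D \<Longrightarrow> d \<le> b"
  shows "W (Sup D) = Sup (W ` D)"
proof -
  note f = ce_facts[OF W]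
  have oc: "order_continuous_on E W" using W by (simp add: cond_exp_def)
  have S: "Sup D \<in> E" "bdd_above D" using Sup_in_E[OF D(1,2) b] by auto
  define s where "s = Sup D"
  have sub: "\<And>d. d \<in> D \<Longrightarrow> d \<le> s" unfolding s_def using cSup_upper S(2) by blast
  define D' where "D' = (\<lambda>d. s - d) ` D"
  have D'E: "D' \<subseteq> E" unfolding D'_def s_def using D S by auto
  have D'ne: "D' \<noteq> {}" unfolding D'_def using D by auto
  have D'dd: "down_directed D'" unfolding D'_def down_directed_def
  proof (intro ballI)
    fix u v assume "u \<in> (\<lambda>d. s - d) ` D" "v \<in> (\<lambda>d. s - d) ` D"
    then obtain a b where ab: "a \<in> D" "b \<in> D" "u = s - a" "v = s - b" by auto
    then obtain c where "c \<in> D" "a \<le> c" "b \<le> c" using D(3) unfolding up_directed_def by blast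
    thus "\<exists>z\<in>(\<lambda>d. s - d) ` D. z \<le> u \<and> z \<le> v" using ab by (intro bexI[of _ "s - c"]) auto
  qed
  have glb: "is_glb_in E D' 0" unfolding is_glb_in_def
  proof (intro conjI ballI impI)
    show "0 \<in> E" by simp
    show "\<And>x. x \<in> D' \<Longrightarrow> 0 \<le> x" unfolding D'_def using sub by auto
    fix l assume l: "l \<in> E" "\<forall>x\<in>D'. l \<le> x"
    hence "\<And>d. d \<in> D \<Longrightarrow> d \<le> s - l" unfolding D'_def by (auto simp: algebra_simps)
    hence "s \<le> s - l" unfolding s_def using D(2) by (intro cSup_least) auto
    thus "l \<le> 0" by simp
  qed
  have glbW: "is_glb_in E (W ` D') 0" using oc D'E D'ne D'dd glb unfolding order_continuous_on_def by blast
  have WD: "W ` D \<subseteq> E" using D f(1) by auto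
  have ubW: "\<And>d. d \<in> D \<Longrightarrow> W d \<le> W s" using f(8) D sub S(1) unfolding s_def by auto
  have ubW': "x \<le> W s" if "x \<in> W ` D" for x using that ubW by blast
  have neW: "W ` D \<noteq> {}" using D(2) by simp
  have T: "Sup (W ` D) \<in> E" "bdd_above (W ` D)"
    using Sup_in_E[OF WD neW f(1)[OF S(1)[folded s_def]] ubW'] by auto
  have le1: "Sup (W ` D) \<le> W s" using D(2) ubW by (intro cSup_least) auto
  have "W s - Sup (W ` D) \<le> 0"
  proof -
    have "W s - Sup (W ` D) \<in> E" using T f(1) S(1) unfolding s_def by auto
    moreover have "\<forall>x\<in>W ` D'. W s - Sup (W ` D) \<le> x"
    proof
      fix x assume "x \<in> W ` D'"
      then obtain d where d: "d \<in> D" "x = W (s - d)" unfolding D'_def by auto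
      have "W d \<le> Sup (W ` D)" using T(2) d(1) by (intro cSup_upper) auto
      moreover have "x = W s - W d" using d f(6) D S(1) unfolding s_def by auto
      ultimately show "W s - Sup (W ` D) \<le> x" by simp
    qed
    ultimately show ?thesis using glbW unfolding is_glb_in_def by blast
  qed
  with le1 show ?thesis unfolding s_def by simp
qed

lemma rng_chain:
  assumes W: "cond_exp E W" and D: "D \<subseteq> W ` E" "D \<noteq> {}" "up_directed D"
    and b: "b \<in> E" "\<And>d. d \<in> D \<Longrightarrow> d \<le> b"
  shows "Sup D \<in> W ` E"
proof -
  note f = ce_facts[OF W]
  have DE: "D \<subseteq> E" using D f(11) by auto
  have "W (Sup D) = Sup (W ` D)" by (rule ce_oc_up[OF W DE D(2,3) b])
  also have "W ` D = D"
  proof -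
    have "\<And>d. d \<in> D \<Longrightarrow> W d = d" using D(1) f(10) by blast
    thus ?thesis by (simp add: image_cong[of D D W id])
  qed
  finally have "W (Sup D) = Sup D" .
  moreover have "Sup D \<in> E" using Sup_in_E[OF DE D(2) b] by simp
  ultimately have "W (Sup D) \<in> W ` E" using imageI[of "Sup D" E W] by blast
  thus ?thesis using \<open>W (Sup D) = Sup D\<close> by simp
qed

end



lemma inf_nat_scale_disj:
  fixes u a :: "'a::{ordered_real_vector,lattice_ab_group_add}"
  assumes "0 \<le> u" "0 \<le> a" "inf u a = 0"
  shows "inf u (real n *\<^sub>R a) = 0"
proof (induction n)
  case 0 then show ?case using assms by (simp add: inf_absorb2)
next
  case (Suc n)
  have "inf u (real (Suc n) *\<^sub>R a) = inf u (real n *\<^sub>R a + a)" by (simp add: algebra_simps)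
  also have "\<dots> \<le> inf u (real n *\<^sub>R a) + inf u a"
    using assms by (intro inf_sub_additive) (auto simp: scaleR_nonneg_nonneg)
  also have "\<dots> = 0" using Suc assms by simp
  finally have "inf u (real (Suc n) *\<^sub>R a) \<le> 0" .
  moreover have "0 \<le> inf u (real (Suc n) *\<^sub>R a)" using assms by (simp add: scaleR_nonneg_nonneg)
  ultimately show ?case by (rule antisym)
qed

lemma vdisj_vabs: "vdisj (vabs x) z \<longleftrightarrow> vdisj x z"
  by (simp add: vdisj_def)

context rs begin

lemma commute_bounded:
  assumes W: "cond_exp E W" and We: "W e = e" and P: "band_projection E P" and Pe: "P e \<in> W ` E"
    and x: "x \<in> E" "0 \<le> x" "x \<le> c *\<^sub>R e" and c: "0 \<le> c"
  shows "W (P x) = P (W x)"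
proof -
  note g = ce_facts[OF W] and h = bp_facts[OF P] and k = bp_more[OF P]
  have WPe: "W (P e) = P e" using g(10)[OF Pe] .
  have ceE: "c *\<^sub>R e \<in> E" by auto
  have Pce: "P (c *\<^sub>R e) = c *\<^sub>R P e" using h(3) by simp
  have Pe0: "0 \<le> P e" using h(6)[of e] by simp
  define y1 where "y1 = W (P x)"
  define y2 where "y2 = W (x - P x)"
  have PxE: "P x \<in> E" using h(1) x by simp
  have y1a: "0 \<le> y1" unfolding y1_def using g(7)[OF PxE] h(6) x by simp
  have "P x \<le> P (c *\<^sub>R e)" using k(4)[OF x(1) ceE x(3)] .
  hence "y1 \<le> W (P (c *\<^sub>R e))" unfolding y1_def using g(8) PxE h(1)[OF ceE] by simp
  also have "W (P (c *\<^sub>R e)) = c *\<^sub>R P e" unfolding Pce using g(3) WPe h(1) by simp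
  finally have y1b: "y1 \<le> c *\<^sub>R P e" .
  have "vabs y1 \<le> vabs (P (c *\<^sub>R e))"
    using y1a y1b Pce Pe0 c by (simp add: scaleR_nonneg_nonneg)
  hence P1: "P y1 = y1" using k(6) g(1) PxE ceE unfolding y1_def by blast
  have xPxE: "x - P x \<in> E" using PxE x by auto
  have y2a: "0 \<le> y2" unfolding y2_def using g(7)[OF xPxE] h(7) x by simp
  have "x - P x \<le> c *\<^sub>R e - P (c *\<^sub>R e)" using k(5)[OF x(1) ceE x(3)] .
  hence "y2 \<le> W (c *\<^sub>R e - P (c *\<^sub>R e))" unfolding y2_def using g(8) xPxE h(1)[OF ceE] ceE by blast
  also have "W (c *\<^sub>R e - P (c *\<^sub>R e)) = c *\<^sub>R e - P (c *\<^sub>R e)"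
    using g(6)[OF ceE h(1)[OF ceE]] g(3)[of "P e" c] g(3)[of e c] h(1)[of e] We Pce WPe by simp
  finally have y2b: "y2 \<le> c *\<^sub>R e - P (c *\<^sub>R e)" .
  have "0 \<le> c *\<^sub>R e - P (c *\<^sub>R e)" using y2a y2b by (rule order_trans)
  hence "vabs y2 \<le> vabs (c *\<^sub>R e - P (c *\<^sub>R e))" using y2a y2b by simp
  hence P2: "P y2 = 0" using k(7) g(1) xPxE ceE unfolding y2_def by blast
  have "W x = y1 + y2" unfolding y1_def y2_def using g(2)[OF PxE xPxE] by simp
  hence "P (W x) = P y1 + P y2" using h(2) g(1) PxE xPxE unfolding y1_def y2_def by simp
  thus ?thesis using P1 P2 unfolding y1_def by simp
qed

lemma e_sup:
  assumes x: "x \<in> E" "0 \<le> x"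
  shows "x = Sup (range (\<lambda>n::nat. inf x (real n *\<^sub>R e)))"
proof -
  note cs = chain_sup[OF x e_E e_nonneg]
  define s where "s = Sup (range (\<lambda>n::nat. inf x (real n *\<^sub>R e)))"
  have "x - s \<in> E" "0 \<le> x - s" using cs x unfolding s_def by auto
  moreover have "inf (vabs (x - s)) e = 0" using cs(9) \<open>0 \<le> x - s\<close> unfolding s_def by simp
  ultimately have "x - s = 0" using e_unitD by blast
  thus ?thesis unfolding s_def by simp
qed

lemma commute_pos:
  assumes W: "cond_exp E W" and We: "W e = e" and P: "band_projection E P" and Pe: "P e \<in> W ` E"
    and x: "x \<in> E" "0 \<le> x"
  shows "W (P x) = P (W x)"
proof -
  note g = ce_facts[OF W] and h = bp_facts[OF P] and k = bp_more[OF P]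
  define D where "D = range (\<lambda>n::nat. inf x (real n *\<^sub>R e))"
  note cs = chain_sup[OF x e_E e_nonneg, folded D_def]
  have xD: "x = Sup D" unfolding D_def by (rule e_sup[OF x])
  have Dsub: "\<And>d. d \<in> D \<Longrightarrow> d \<in> E" using cs(1) by blast
  have step: "W (P d) = P (W d)" if d: "d \<in> D" for d
  proof -
    obtain n where n: "d = inf x (real n *\<^sub>R e)" using d unfolding D_def by blast
    show ?thesis
      by (rule commute_bounded[OF W We P Pe Dsub[OF d] cs(4)[OF d], of "real n"]) (auto simp: n)
  qed
  have PD: "P ` D \<subseteq> E" using Dsub h(1) by blast
  have PDud: "up_directed (P ` D)" using cs(5) k(4) Dsub by (intro up_directed_image) auto
  have PDub: "\<And>z. z \<in> P ` D \<Longrightarrow> z \<le> P x" using k(4) Dsub cs(3) x by blast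
  have WD: "W ` D \<subseteq> E" using Dsub g(1) by blast
  have WDud: "up_directed (W ` D)" using cs(5) g(8) Dsub by (intro up_directed_image) auto
  have WDub: "\<And>z. z \<in> W ` D \<Longrightarrow> z \<le> W x" using g(8) Dsub cs(3) x by blast
  have "W (P x) = W (Sup (P ` D))" using bp_oc_up[OF P cs(1,2,5) x(1) cs(3)] xD by simp
  also have "\<dots> = Sup (W ` P ` D)"
    by (rule ce_oc_up[OF W PD _ PDud h(1)[OF x(1)] PDub]) (use cs(2) in simp)
  also have "W ` P ` D = P ` W ` D"
  proof -
    have "W ` P ` D = (\<lambda>d. W (P d)) ` D" by (simp add: image_image)
    also have "\<dots> = (\<lambda>d. P (W d)) ` D" using step by (rule image_cong[OF refl])
    also have "\<dots> = P ` W ` D" by (simp add: image_image)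
    finally show ?thesis .
  qed
  also have "Sup (P ` W ` D) = P (Sup (W ` D))"
    by (rule bp_oc_up[OF P WD _ WDud g(1)[OF x(1)] WDub, symmetric]) (use cs(2) in simp)
  also have "Sup (W ` D) = W x" using ce_oc_up[OF W cs(1,2,5) x(1) cs(3)] xD by simp
  finally show ?thesis .
qed

lemma commute:
  assumes W: "cond_exp E W" and We: "W e = e" and P: "band_projection E P" and Pe: "P e \<in> W ` E"
    and x: "x \<in> E"
  shows "W (P x) = P (W x)"
proof -
  note g = ce_facts[OF W] and h = bp_facts[OF P] and k = bp_more[OF P]
  have xp: "pprt x \<in> E" "0 \<le> pprt x" and xn: "- nprt x \<in> E" "0 \<le> - nprt x" using x by auto
  have dec: "x = pprt x - (- nprt x)" using prts[of x] by simp
  have "W (P x) = W (P (pprt x) - P (- nprt x))" using k(2)[OF xp(1) xn(1)] dec by metis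
  also have "\<dots> = W (P (pprt x)) - W (P (- nprt x))" using g(6) h(1) xp xn by blast
  also have "\<dots> = P (W (pprt x)) - P (W (- nprt x))"
    using commute_pos[OF W We P Pe xp] commute_pos[OF W We P Pe xn] by simp
  also have "\<dots> = P (W (pprt x) - W (- nprt x))" using k(2) g(1) xp xn by simp
  also have "\<dots> = P (W x)" using g(6)[OF xp(1) xn(1)] dec by metis
  finally show ?thesis .
qed

end



context rs begin

definition Rop :: "'a \<Rightarrow> 'a \<Rightarrow> 'a" where
  "Rop a x = Sup (range (\<lambda>n::nat. inf x (real n *\<^sub>R a)))"

lemma Rop_disj:
  assumes x: "x \<in> E" "0 \<le> x" and a: "a \<in> E" "0 \<le> a" and y: "vdisj y a"
  shows "vdisj (Rop a x) y"
proof -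
  define D where "D = range (\<lambda>n::nat. inf x (real n *\<^sub>R a))"
  note cs = chain_sup[OF x a, folded D_def]
  have R: "Rop a x = Sup D" unfolding Rop_def D_def ..
  define u where "u = vabs y"
  have u0: "0 \<le> u" unfolding u_def by simp
  have ua: "inf u a = 0" using y a unfolding u_def vdisj_def by simp
  define t where "t = inf (Sup D) u"
  have t0: "0 \<le> t" unfolding t_def using cs(7) u0 by simp
  have bdd: "bdd_above D" using cs(3) unfolding bdd_above_def by blast
  have "d \<le> Sup D - t" if d: "d \<in> D" for d
  proof -
    obtain n where n: "d = inf x (real n *\<^sub>R a)" using d unfolding D_def by blast
    have "inf d t \<le> inf (real n *\<^sub>R a) u" unfolding n t_def by (intro inf_mono) auto
    also have "\<dots> = 0" using inf_nat_scale_disj[OF u0 a(2) ua] by (simp add: inf_commute)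
    finally have "inf d t \<le> 0" .
    moreover have "0 \<le> inf d t" using cs(4)[OF d] t0 by simp
    ultimately have "inf d t = 0" by (rule antisym)
    hence "d + t = sup d t" by (rule disj_add_sup)
    also have "\<dots> \<le> Sup D" using cSup_upper[OF d bdd] t_def by simp
    finally show ?thesis by (simp add: algebra_simps)
  qed
  hence "Sup D \<le> Sup D - t" using cs(2) by (intro cSup_least) auto
  hence "t \<le> 0" by simp
  hence "t = 0" using t0 by (rule antisym)
  thus ?thesis unfolding vdisj_def R t_def u_def using cs(7) by simp
qed

lemma sign_proj:
  assumes h: "h \<in> E"
  obtains P where "band_projection E P" "P h = pprt h"
    "\<And>x. x \<in> E \<Longrightarrow> inf (vabs (P x)) (- nprt h) = 0"
    "\<And>W. cond_exp E W \<Longrightarrow> W e = e \<Longrightarrow> h \<in> W ` E \<Longrightarrow> P e \<in> W ` E"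
proof -
  define a where "a = - nprt h"
  have aE: "a \<in> E" and a0: "0 \<le> a" unfolding a_def using h by auto
  define B where "B = {y\<in>E. vdisj y a}"
  define P where "P x = (pprt x - Rop a (pprt x)) - ((- nprt x) - Rop a (- nprt x))" for x
  have vda: "vdisj y a \<longleftrightarrow> inf (vabs y) a = 0" for y unfolding vdisj_def using a0 by simp
  have band: "band_in E B" unfolding band_in_def riesz_subspace_def
  proof (intro conjI allI ballI impI)
    show "B \<subseteq> E" unfolding B_def by blast
    show "0 \<in> B" unfolding B_def by simp
    show "x + y \<in> B" if "x \<in> B" "y \<in> B" for x y
    proof -
      have "vdisj (x + y) a" using that unfolding B_def by (intro vdisj_add) auto
      thus ?thesis using that unfolding B_def by auto
    qed
    show "c *\<^sub>R x \<in> B" if "x \<in> B" for x c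
    proof -
      have "vdisj (c *\<^sub>R x) a" using that unfolding B_def by (intro vdisj_scale) auto
      thus ?thesis using that unfolding B_def by auto
    qed
    show "sup x y \<in> B" if xy: "x \<in> B" "y \<in> B" for x y
    proof -
      have "vabs (sup x y) \<le> vabs (vabs x + vabs y)"
      proof -
        have "sup x y \<le> vabs x + vabs y"
          using add_mono[OF vabs_ge(1)[of x] vabs_nonneg[of y]] add_mono[OF vabs_nonneg[of x] vabs_ge(1)[of y]]
          by simp
        moreover have "- sup x y \<le> vabs x + vabs y"
        proof -
          have "- sup x y \<le> - x" by simp
          also have "\<dots> \<le> vabs x" by (rule vabs_ge(2))
          also have "\<dots> \<le> vabs x + vabs y" by simp
          finally show ?thesis .
        qed
        ultimately show ?thesis by (simp add: vabs_le_iff)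
      qed
      moreover have "vdisj (vabs x + vabs y) a" using xy unfolding B_def
        by (auto intro!: vdisj_add simp: vdisj_vabs)
      ultimately have "vdisj (sup x y) a" by (rule vdisj_solid)
      thus ?thesis using xy unfolding B_def by auto
    qed
    show "x \<in> B" if xy: "x \<in> E" "y \<in> B" "vabs x \<le> vabs y" for x y
    proof -
      have "vdisj y a" using xy(2) unfolding B_def by simp
      with xy(3) have "vdisj x a" by (rule vdisj_solid)
      thus ?thesis using xy(1) unfolding B_def by simp
    qed
    show "s \<in> B" if S0: "S \<subseteq> B \<and> is_lub_in E S s" for S s
    proof (cases "S = {}")
      case True
      have S: "S \<subseteq> B" "is_lub_in E S s" using S0 by auto
      have sE: "s \<in> E" and least: "\<And>b. b \<in> E \<Longrightarrow> s \<le> b" using S True unfolding is_lub_in_def by auto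
      have "s \<le> 0" using least by simp
      moreover have "s + s \<in> E" using sE sE by (rule E_add)
      hence "s \<le> s + s" by (rule least)
      hence "0 \<le> s" by simp
      ultimately have "s = 0" by (rule antisym)
      thus ?thesis unfolding B_def by simp
    next
      case False
      have S: "S \<subseteq> B" "is_lub_in E S s" using S0 by auto
      from False obtain x0 where x0: "x0 \<in> S" by blast
      have sE: "s \<in> E" and ub: "\<And>x. x \<in> S \<Longrightarrow> x \<le> s"
        and least: "\<And>b. b \<in> E \<Longrightarrow> (\<forall>x\<in>S. x \<le> b) \<Longrightarrow> s \<le> b" using S unfolding is_lub_in_def by auto
      have SB: "\<And>x. x \<in> S \<Longrightarrow> vdisj x a" using S unfolding B_def by blast
      have neg: "vdisj (nprt s) a"
      proof -
        have "nprt x0 \<le> nprt s" using ub[OF x0] by (rule nprt_mono)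
        hence 1: "- nprt s \<le> - nprt x0" by simp
        have eq: "vabs (nprt s) = - nprt s" using vabs_pos[of "- nprt s"] by simp
        have "vabs (nprt s) \<le> vabs x0" unfolding eq using 1 nprt_le_vabs[of x0] by (rule order_trans)
        thus ?thesis using SB[OF x0] by (rule vdisj_solid)
      qed
      define c where "c = inf (pprt s) a"
      have c0: "0 \<le> c" unfolding c_def using a0 by simp
      have cs: "c \<le> pprt s" unfolding c_def by simp
      have "s \<le> inf s (pprt s - c)"
      proof (rule least)
        show "inf s (pprt s - c) \<in> E" unfolding c_def using sE aE by (intro E_inf E_diff E_pprt)
        show "\<forall>x\<in>S. x \<le> inf s (pprt s - c)"
        proof
          fix x assume x: "x \<in> S"
          have "vabs (pprt x) \<le> vabs x" using pprt_le_vabs[of x] by simp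
          hence "vdisj (pprt x) a" using SB[OF x] by (rule vdisj_solid)
          hence "inf (pprt x) a = 0" using vda by simp
          moreover have "inf (pprt x) c \<le> inf (pprt x) a" by (rule inf_mono[OF order_refl]) (simp add: c_def)
          ultimately have "inf (pprt x) c \<le> 0" by simp
          hence "inf (pprt x) c = 0" using c0 by (simp add: antisym)
          hence "pprt x + c = sup (pprt x) c" by (rule disj_add_sup)
          also have "\<dots> \<le> pprt s" using pprt_mono[OF ub[OF x]] cs by simp
          finally have "pprt x \<le> pprt s - c" by (simp add: algebra_simps)
          hence "x \<le> pprt s - c" using order_trans[of x "pprt x"] by (simp add: pprt_def)
          thus "x \<le> inf s (pprt s - c)" using ub[OF x] by simp
        qed
      qed
      hence "s \<le> pprt s - c" by simp
      moreover have "0 \<le> pprt s - c" using cs by simp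
      ultimately have "pprt s \<le> pprt s - c" unfolding pprt_def by simp
      hence "c = 0" using c0 by simp
      hence pos: "vdisj (pprt s) a" unfolding c_def vda by simp
      have "vdisj (pprt s + nprt s) a" using pos neg by (rule vdisj_add)
      hence "vdisj s a" using prts[of s] by simp
      thus ?thesis using sE unfolding B_def by simp
    qed
  qed
  have Rin: "Rop a x \<in> disj_compl E B" if x: "x \<in> E" "0 \<le> x" for x
  proof -
    have "Rop a x \<in> E" using chain_sup(6)[OF x aE a0] unfolding Rop_def .
    moreover have "\<forall>y\<in>B. vdisj (Rop a x) y" unfolding B_def using Rop_disj[OF x aE a0] by blast
    ultimately show ?thesis unfolding disj_compl_def by blast
  qed
  have Rout: "x - Rop a x \<in> B" if x: "x \<in> E" "0 \<le> x" for x
  proof -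
    note cs = chain_sup[OF x aE a0]
    have "0 \<le> x - Rop a x" using cs(8) unfolding Rop_def by simp
    moreover have "inf (x - Rop a x) a = 0" using cs(9) unfolding Rop_def .
    ultimately have "vdisj (x - Rop a x) a" using vda by simp
    moreover have "x - Rop a x \<in> E" using cs(6) x unfolding Rop_def by auto
    ultimately show ?thesis unfolding B_def by blast
  qed
  have PB: "P x \<in> B" if x: "x \<in> E" for x
    unfolding P_def using Rout[of "pprt x"] Rout[of "- nprt x"] x band_props(5)[OF band] by auto
  have PC: "x - P x \<in> disj_compl E B" if x: "x \<in> E" for x
  proof -
    have "x - P x = Rop a (pprt x) - Rop a (- nprt x)" unfolding P_def
      using prts[of x] by (simp add: algebra_simps)
    thus ?thesis using Rin[of "pprt x"] Rin[of "- nprt x"] x dc_props(5) by auto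
  qed
  have bpP: "bpB P B" unfolding bpB_def using band PB PC by blast
  hence bp: "band_projection E P" unfolding band_projection_def bpB_def by blast
  have Ph: "P h = pprt h"
  proof (rule bpB_unique[OF bpP h])
    show "pprt h \<in> B" unfolding B_def using h vda inf_pprt_nprt[of h] a_def by auto
    show "nprt h \<in> disj_compl E B" unfolding disj_compl_def B_def
    proof (intro CollectI conjI ballI)
      show "nprt h \<in> E" using h by auto
      fix y assume "y \<in> {y \<in> E. vdisj y a}"
      hence "vdisj y a" by simp
      moreover have "vabs (nprt h) = a" unfolding a_def by (simp add: vabs_prts nprt_def)
      ultimately show "vdisj (nprt h) y" unfolding vdisj_def using a0 by (simp add: inf_commute)
    qed
    show "h = pprt h + nprt h" by (rule prts)
  qed
  have dis: "inf (vabs (P x)) (- nprt h) = 0" if "x \<in> E" for x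
    using PB[OF that] vda unfolding B_def a_def by auto
  have Pe: "P e \<in> W ` E" if W: "cond_exp E W" and We: "W e = e" and hW: "h \<in> W ` E" for W
  proof -
    note g = ce_facts[OF W] and r = rng_more[OF W]
    have Pe_eq: "P e = e - Rop a e"
    proof -
      have "\<And>n::nat. inf 0 (real n *\<^sub>R a) = 0" using a0 by (simp add: inf_absorb1 scaleR_nonneg_nonneg)
      hence "Rop a 0 = Sup {0}" unfolding Rop_def by simp
      hence "Rop a 0 = 0" by simp
      thus ?thesis unfolding P_def by simp
    qed
    have "W e \<in> W ` E" by (rule imageI[OF e_E])
    hence eW: "e \<in> W ` E" using We by simp
    have aW: "a \<in> W ` E" unfolding a_def by (rule r(1)[OF r(6)[OF hW]])
    define D where "D = range (\<lambda>n::nat. inf e (real n *\<^sub>R a))"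
    note cs = chain_sup[OF e_E e_nonneg aE a0, folded D_def]
    have "\<And>n::nat. inf e (real n *\<^sub>R a) \<in> W ` E" by (intro r(3) eW g(13) aW)
    hence "D \<subseteq> W ` E" unfolding D_def by (simp add: image_subset_iff)
    hence "Sup D \<in> W ` E" using rng_chain[OF W _ cs(2,5) e_E cs(3)] by blast
    hence "Rop a e \<in> W ` E" unfolding Rop_def D_def .
    thus ?thesis unfolding Pe_eq by (rule r(2)[OF eW])
  qed
  show ?thesis using that bp Ph dis Pe unfolding a_def by blast
qed

end



lemma fa_flip: "f_algebra_unit m e \<Longrightarrow> f_algebra_unit (\<lambda>x y. m y x) e"
  unfolding f_algebra_unit_def by auto

locale fa =
  fixes m :: "'a::{ordered_real_vector,lattice_ab_group_add} \<Rightarrow> 'a \<Rightarrow> 'a" and e :: 'a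
  assumes falg: "f_algebra_unit m e"
begin

lemma addL: "m (x + y) z = m x z + m y z" using falg by (simp add: f_algebra_unit_def)
lemma addR: "m x (y + z) = m x y + m x z" using falg by (simp add: f_algebra_unit_def)
lemma scaleL: "m (c *\<^sub>R x) y = c *\<^sub>R m x y" using falg by (simp add: f_algebra_unit_def)
lemma scaleR: "m x (c *\<^sub>R y) = c *\<^sub>R m x y" using falg by (simp add: f_algebra_unit_def)
lemma assoc: "m (m x y) z = m x (m y z)" using falg by (simp add: f_algebra_unit_def)
lemma pos: "0 \<le> x \<Longrightarrow> 0 \<le> y \<Longrightarrow> 0 \<le> m x y" using falg by (simp add: f_algebra_unit_def)
lemma disj: "0 \<le> x \<Longrightarrow> 0 \<le> y \<Longrightarrow> 0 \<le> z \<Longrightarrow> inf x y = 0 \<Longrightarrow> inf (m x z) y = 0 \<and> inf (m z x) y = 0"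
  using falg unfolding f_algebra_unit_def by blast
lemma unitL[simp]: "m e x = x" using falg by (simp add: f_algebra_unit_def)
lemma unitR[simp]: "m x e = x" using falg by (simp add: f_algebra_unit_def)

lemma zeroL[simp]: "m 0 y = 0" using scaleL[of 0 0 y] by simp
lemma zeroR[simp]: "m y 0 = 0" using scaleR[of y 0 0] by simp
lemma minusL: "m (- x) y = - m x y" using scaleL[of "-1" x y] by simp
lemma minusR: "m x (- y) = - m x y" using scaleR[of x "-1" y] by simp
lemma diffL: "m (x - y) z = m x z - m y z" using addL[of x "-y" z] minusL by simp
lemma diffR: "m x (y - z) = m x y - m x z" using addR[of x y "-z"] minusR by simp

lemma monoL: "0 \<le> z \<Longrightarrow> x \<le> y \<Longrightarrow> m x z \<le> m y z"
  using pos[of "y - x" z] diffL by simp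
lemma monoR: "0 \<le> z \<Longrightarrow> x \<le> y \<Longrightarrow> m z x \<le> m z y"
  using pos[of z "y - x"] diffR by simp

lemma le_abs_prod: "m a b \<le> m (vabs a) (vabs b)"
proof -
  define a1 a2 b1 b2 where "a1 = pprt a" "a2 = - nprt a" "b1 = pprt b" "b2 = - nprt b"
  have nn: "0 \<le> a1" "0 \<le> a2" "0 \<le> b1" "0 \<le> b2" unfolding a1_a2_b1_b2_def by auto
  have a: "a = a1 - a2" and b: "b = b1 - b2" unfolding a1_a2_b1_b2_def using prts by auto
  have va: "vabs a = a1 + a2" and vb: "vabs b = b1 + b2" unfolding a1_a2_b1_b2_def by (auto simp: vabs_prts)
  define X where "X = m a1 b1 + m a2 b2"
  define Y where "Y = m a1 b2 + m a2 b1"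
  have "m a b = X - Y" unfolding a b X_def Y_def by (simp add: diffL diffR algebra_simps)
  moreover have "m (vabs a) (vabs b) = X + Y"
    unfolding va vb X_def Y_def by (simp add: addL addR algebra_simps)
  moreover have "0 \<le> Y" unfolding Y_def using nn by (intro add_nonneg_nonneg pos)
  moreover have "X - Y \<le> X + Y"
  proof -
    have "X - Y \<le> X" using \<open>0 \<le> Y\<close> by simp
    also have "X \<le> X + Y" using \<open>0 \<le> Y\<close> by simp
    finally show ?thesis .
  qed
  ultimately show ?thesis by simp
qed

end

context rs begin

lemma component_pos:
  assumes F: "f_algebra_unit m e" and P: "band_projection E P" and x: "x \<in> E" "0 \<le> x"
  shows "m (P e) x = P x"
proof -
  interpret fa m e by (rule fa.intro[OF F])
  note h = bp_facts[OF P] and k = bp_more[OF P]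
  define p where "p = P e"
  define q where "q = e - P e"
  have p0: "0 \<le> p" unfolding p_def using h(6) by simp
  have q0: "0 \<le> q" unfolding q_def using h(7) by simp
  have pq: "inf p q = 0" using h(8)[OF e_E e_E] p0 q0 unfolding p_def q_def vdisj_def by simp
  have eq: "e = p + q" unfolding p_def q_def by simp
  define z where "z = m p x"
  define z' where "z' = m q x"
  have z0: "0 \<le> z" "0 \<le> z'" unfolding z_def z'_def using p0 q0 x pos by auto
  have zz: "z + z' = x" unfolding z_def z'_def using addL[of p q x] eq[symmetric] by simp
  have zx: "z \<le> x" using add_mono[OF order_refl[of z] z0(2)] zz by simp
  have zE: "z \<in> E" using ideal[OF x(1) z0(1) zx] .
  have "z' = x - z" using zz by (simp add: algebra_simps)
  hence z'E: "z' \<in> E" using E_diff[OF x(1) zE] by simp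
  have d1: "inf z q = 0" unfolding z_def using disj[OF p0 q0 x(2) pq] by simp
  have d2: "inf z' p = 0" unfolding z'_def using disj[OF q0 p0 x(2)] pq by (simp add: inf_commute)
  have Pz: "P z = z"
  proof -
    define w where "w = z - P z"
    have w0: "0 \<le> w" "w \<le> z" unfolding w_def using h(6) h(7) zE z0 by auto
    have wE: "w \<in> E" unfolding w_def using zE h(1) by auto
    have "inf p w = 0" using h(8)[OF e_E zE] p0 w0 unfolding p_def w_def vdisj_def by simp
    moreover have "inf w q \<le> 0"
    proof -
      have "inf w q \<le> inf z q" using w0(2) by (rule inf_mono) simp
      thus ?thesis using d1 by simp
    qed
    ultimately have "inf w p + inf w q \<le> 0" by (simp add: inf_commute)
    moreover have "inf w e \<le> inf w p + inf w q" using inf_sub_additive[OF w0(1) p0 q0] eq by simp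
    ultimately have "inf w e \<le> 0" by (rule order_trans[rotated])
    moreover have "0 \<le> inf w e" using w0 by simp
    ultimately have "inf w e = 0" by (rule antisym)
    hence "w = 0" using e_unitD[OF wE] w0 by simp
    thus ?thesis unfolding w_def by simp
  qed
  have Pz': "P z' = 0"
  proof -
    define v where "v = P z'"
    have v0: "0 \<le> v" "v \<le> z'" unfolding v_def using h(6) h(7) z'E z0 by auto
    have vE: "v \<in> E" unfolding v_def using z'E h(1) by auto
    have "inf v q = 0" using h(8)[OF z'E e_E] v0 q0 unfolding q_def v_def vdisj_def by simp
    moreover have "inf v p \<le> 0"
    proof -
      have "inf v p \<le> inf z' p" using v0(2) by (rule inf_mono) simp
      thus ?thesis using d2 by simp
    qed
    ultimately have "inf v p + inf v q \<le> 0" by simp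
    moreover have "inf v e \<le> inf v p + inf v q" using inf_sub_additive[OF v0(1) p0 q0] eq by simp
    ultimately have "inf v e \<le> 0" by (rule order_trans[rotated])
    moreover have "0 \<le> inf v e" using v0 by simp
    ultimately have "inf v e = 0" by (rule antisym)
    thus ?thesis using e_unitD[OF vE] v0 unfolding v_def by simp
  qed
  have "P x = P z + P z'" using zz h(2)[OF zE z'E] by simp
  thus ?thesis using Pz Pz' unfolding z_def p_def by simp
qed

lemma component:
  assumes F: "f_algebra_unit m e" and P: "band_projection E P" and x: "x \<in> E"
  shows "m (P e) x = P x" "m x (P e) = P x"
proof -
  have xp: "pprt x \<in> E" "0 \<le> pprt x" and xn: "- nprt x \<in> E" "0 \<le> - nprt x" using x by auto
  have dec: "x = pprt x - (- nprt x)" using prts[of x] by simp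
  note k = bp_more[OF P]
  show "m (P e) x = P x"
  proof -
    interpret fa m e by (rule fa.intro[OF F])
    have "m (P e) x = m (P e) (pprt x - (- nprt x))" using dec by simp
    also have "\<dots> = m (P e) (pprt x) - m (P e) (- nprt x)" by (rule diffR)
    also have "\<dots> = P (pprt x) - P (- nprt x)"
      using component_pos[OF F P xp] component_pos[OF F P xn] by simp
    also have "\<dots> = P (pprt x - (- nprt x))" using k(2)[OF xp(1) xn(1)] by simp
    also have "\<dots> = P x" using dec by simp
    finally show ?thesis .
  qed
  show "m x (P e) = P x"
  proof -
    note F' = fa_flip[OF F]
    interpret fa "\<lambda>x y. m y x" e by (rule fa.intro[OF F'])
    have "m x (P e) = m (pprt x - (- nprt x)) (P e)" using dec by simp
    also have "\<dots> = m (pprt x) (P e) - m (- nprt x) (P e)" by (rule diffR)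
    also have "\<dots> = P (pprt x) - P (- nprt x)"
      using component_pos[OF F' P xp] component_pos[OF F' P xn] by simp
    also have "\<dots> = P (pprt x - (- nprt x))" using k(2)[OF xp(1) xn(1)] by simp
    also have "\<dots> = P x" using dec by simp
    finally show ?thesis .
  qed
qed

lemma prod_E:
  assumes F: "f_algebra_unit m e" and x: "x \<in> E" and k: "k \<in> E" "vabs k \<le> c *\<^sub>R e" and c: "0 \<le> c"
  shows "m x k \<in> E" "m k x \<in> E"
proof -
  have gen: "mm x k \<in> E" if F: "f_algebra_unit mm e" and x: "x \<in> E" and k: "k \<in> E" "vabs k \<le> c *\<^sub>R e" for mm x k
  proof -
    interpret fa mm e by (rule fa.intro[OF F])
    have pp: "mm a b \<in> E" if ab: "a \<in> E" "0 \<le> a" "0 \<le> b" "b \<le> c *\<^sub>R e" for a b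
    proof -
      have "0 \<le> mm a b" using ab pos by simp
      moreover have "mm a b \<le> mm a (c *\<^sub>R e)" using ab monoR by simp
      moreover have "mm a (c *\<^sub>R e) = c *\<^sub>R a" using scaleR by simp
      ultimately show ?thesis using ideal[of "c *\<^sub>R a"] ab by auto
    qed
    have kp: "pprt k \<le> c *\<^sub>R e" "- nprt k \<le> c *\<^sub>R e"
      using order_trans[OF pprt_le_vabs k(2)] order_trans[OF nprt_le_vabs k(2)] by auto
    define x1 x2 k1 k2 where "x1 = pprt x" "x2 = - nprt x" "k1 = pprt k" "k2 = - nprt k"
    have xd: "x1 - x2 = x" and kd: "k1 - k2 = k" unfolding x1_x2_k1_k2_def using prts[of x, symmetric] prts[of k, symmetric] by simp_all
    have "mm x k = mm (x1 - x2) (k1 - k2)" by (simp only: xd kd)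
    also have "\<dots> = mm x1 k1 - mm x1 k2 - (mm x2 k1 - mm x2 k2)" by (simp add: diffL diffR)
    finally have "mm x k = mm (pprt x) (pprt k) - mm (pprt x) (- nprt k) - (mm (- nprt x) (pprt k) - mm (- nprt x) (- nprt k))"
      unfolding x1_x2_k1_k2_def .
    moreover have "mm (pprt x) (pprt k) \<in> E" "mm (pprt x) (- nprt k) \<in> E"
      "mm (- nprt x) (pprt k) \<in> E" "mm (- nprt x) (- nprt k) \<in> E"
      using pp[OF E_pprt[OF x] zero_le_pprt zero_le_pprt kp(1)]
        pp[OF E_pprt[OF x] zero_le_pprt _ kp(2)]
        pp[OF E_uminus[OF E_nprt[OF x]] _ zero_le_pprt kp(1)]
        pp[OF E_uminus[OF E_nprt[OF x]] _ _ kp(2)] by simp_all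
    ultimately show ?thesis by (simp only:) (intro E_diff)
  qed
  show "m x k \<in> E" using gen[OF F x k] .
  show "m k x \<in> E" using gen[OF fa_flip[OF F] x k] by simp
qed

end



context rs begin

lemma avg_induct:
  assumes F: "f_algebra_unit m e" and W: "cond_exp E W" and We: "W e = e"
    and x: "x \<in> E" "0 \<le> x" and eps: "0 < \<epsilon>"
  shows "\<forall>k. k \<in> W ` E \<and> 0 \<le> k \<and> k \<le> (real M * \<epsilon>) *\<^sub>R e \<longrightarrow>
           vabs (W (m x k) - m (W x) k) \<le> \<epsilon> *\<^sub>R W x"
proof (induction M)
  interpret fa m e by (rule fa.intro[OF F])
  note g = ce_facts[OF W]
  have Wx0: "0 \<le> W x" using g(7) x by simp
  case 0
  show ?case
  proof (intro allI impI)
    fix k assume "k \<in> W ` E \<and> 0 \<le> k \<and> k \<le> (real 0 * \<epsilon>) *\<^sub>R e"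
    hence "k = 0" by (simp add: antisym)
    thus "vabs (W (m x k) - m (W x) k) \<le> \<epsilon> *\<^sub>R W x" using g(4) Wx0 eps by (simp add: scaleR_nonneg_nonneg)
  qed
next
  interpret fa m e by (rule fa.intro[OF F])
  note g = ce_facts[OF W] and r = rng_more[OF W]
  have Wx0: "0 \<le> W x" using g(7) x by simp
  have WxE: "W x \<in> E" using g(1) x by simp
  have eW: "e \<in> W ` E" proof - have "W e \<in> W ` E" by (rule imageI[OF e_E]) thus ?thesis using We by simp qed
  case (Suc M)
  show ?case
  proof (intro allI impI)
    fix k assume kk: "k \<in> W ` E \<and> 0 \<le> k \<and> k \<le> (real (Suc M) * \<epsilon>) *\<^sub>R e"
    have kW: "k \<in> W ` E" and k0: "0 \<le> k" and kb: "k \<le> (real (Suc M) * \<epsilon>) *\<^sub>R e" using kk by auto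
    have kE: "k \<in> E" using g(11)[OF kW] .
    define h where "h = k - \<epsilon> *\<^sub>R e"
    have hW: "h \<in> W ` E" unfolding h_def by (intro r(2) kW g(13) eW)
    have hE: "h \<in> E" using g(11)[OF hW] .
    obtain P where P: "band_projection E P" "P h = pprt h"
      and PeW: "\<And>W. cond_exp E W \<Longrightarrow> W e = e \<Longrightarrow> h \<in> W ` E \<Longrightarrow> P e \<in> W ` E"
      using sign_proj[OF hE] by metis
    note bf = bp_facts[OF P(1)] and bm = bp_more[OF P(1)]
    have pW: "P e \<in> W ` E" using PeW[OF W We hW] .
    define p where "p = P e"
    have pE: "p \<in> E" and p0: "0 \<le> p" unfolding p_def using bf(1) bf(6) by auto
    define k' where "k' = pprt h"
    have k'W: "k' \<in> W ` E" unfolding k'_def by (rule r(5)[OF hW])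
    have k'E: "k' \<in> E" using g(11)[OF k'W] .
    have k'0: "0 \<le> k'" unfolding k'_def by simp
    have k'b: "k' \<le> (real M * \<epsilon>) *\<^sub>R e"
    proof -
      have "h \<le> (real M * \<epsilon>) *\<^sub>R e" using kb unfolding h_def by (simp add: algebra_simps)
      hence "pprt h \<le> pprt ((real M * \<epsilon>) *\<^sub>R e)" by (rule pprt_mono)
      also have "\<dots> = (real M * \<epsilon>) *\<^sub>R e" using eps by (simp add: scaleR_nonneg_nonneg)
      finally show ?thesis unfolding k'_def .
    qed
    have IH: "vabs (W (m x k') - m (W x) k') \<le> \<epsilon> *\<^sub>R W x" using Suc.IH k'W k'0 k'b by blast
    have Pk: "P k = k' + \<epsilon> *\<^sub>R p"
    proof -
      have "k = h + \<epsilon> *\<^sub>R e" unfolding h_def by simp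
      hence "P k = P h + P (\<epsilon> *\<^sub>R e)" using bf(2)[OF hE E_scale[OF e_E]] by simp
      thus ?thesis using P(2) bf(3)[OF e_E] unfolding k'_def p_def by simp
    qed
    define rr where "rr = k - P k"
    have rrE: "rr \<in> E" unfolding rr_def using kE bf(1) by auto
    have rr0: "0 \<le> rr" unfolding rr_def using bf(7)[OF kE k0] by simp
    have rrb: "rr \<le> \<epsilon> *\<^sub>R e"
    proof -
      have "rr = nprt h + \<epsilon> *\<^sub>R e - \<epsilon> *\<^sub>R p" unfolding rr_def Pk k'_def h_def
        using prts[of "k - \<epsilon> *\<^sub>R e"] by (simp add: algebra_simps)
      also have "\<dots> \<le> \<epsilon> *\<^sub>R e"
      proof -
        have sn: "0 \<le> \<epsilon> *\<^sub>R p" using p0 eps by (simp add: scaleR_nonneg_nonneg)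
        have "nprt h \<le> \<epsilon> *\<^sub>R p" using order_trans[OF nprt_le_zero sn] .
        thus ?thesis by (simp add: algebra_simps)
      qed
      finally show ?thesis .
    qed
    have Prr: "P rr = 0" unfolding rr_def using bf(5)[OF kE] .
    have kdec: "k = k' + \<epsilon> *\<^sub>R p + rr" unfolding rr_def using Pk by simp
    have prodE: "m y z \<in> E" if "y \<in> E" "z \<in> E" "vabs z \<le> C *\<^sub>R e" "0 \<le> C" for y z C
      using prod_E[OF F that] by simp
    have eps0: "0 \<le> \<epsilon>" using eps by simp
    have vk': "vabs k' \<le> (real M * \<epsilon>) *\<^sub>R e" using k'0 k'b by simp
    have vrr: "vabs rr \<le> \<epsilon> *\<^sub>R e" using rr0 rrb by simp
    have vp: "vabs p \<le> 1 *\<^sub>R e" using p0 bf(7)[OF e_E] unfolding p_def by simp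
    have xk'E: "m x k' \<in> E" using prodE[OF x(1) k'E vk'] eps by simp
    have xrrE: "m x rr \<in> E" using prodE[OF x(1) rrE vrr eps0] .
    have xpE: "m x p \<in> E" using prodE[OF x(1) pE vp] by simp
    have Wk'E: "m (W x) k' \<in> E" using prodE[OF WxE k'E vk'] eps by simp
    have WrrE: "m (W x) rr \<in> E" using prodE[OF WxE rrE vrr eps0] .
    have comp: "m y p = P y" if "y \<in> E" for y using component(2)[OF F P(1) that] unfolding p_def .
    have mid: "W (m x p) = m (W x) p"
      using comp[OF x(1)] comp[OF WxE] commute[OF W We P(1) pW x(1)] by simp
    define z1 where "z1 = W (m x k') - m (W x) k'"
    define z2 where "z2 = W (m x rr) - m (W x) rr"
    have z1E: "z1 \<in> E" unfolding z1_def using g(1)[OF xk'E] Wk'E by auto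
    have z2E: "z2 \<in> E" unfolding z2_def using g(1)[OF xrrE] WrrE by auto
    have zdec: "W (m x k) - m (W x) k = z1 + z2"
    proof -
      have "m x k = m x k' + \<epsilon> *\<^sub>R m x p + m x rr" unfolding kdec by (simp add: addR scaleR)
      hence "W (m x k) = W (m x k') + \<epsilon> *\<^sub>R W (m x p) + W (m x rr)"
        using g(2) g(3) xk'E xpE xrrE by (simp add: E_add E_scale)
      moreover have "m (W x) k = m (W x) k' + \<epsilon> *\<^sub>R m (W x) p + m (W x) rr"
        unfolding kdec by (simp add: addR scaleR)
      ultimately show ?thesis unfolding z1_def z2_def using mid by (simp add: algebra_simps)
    qed
    have Pk': "P k' = k'" unfolding k'_def using P(2) bf(4)[OF hE] by simp
    have Pz1: "P z1 = z1"
    proof -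
      have a: "m y k' = P (m y k')" if "y \<in> E" "m y k' \<in> E" for y
      proof -
        have "m y k' = m y (P k')" using Pk' by simp
        also have "\<dots> = m y (m k' p)" using comp[OF k'E] by simp
        also have "\<dots> = m (m y k') p" by (simp add: assoc)
        also have "\<dots> = P (m y k')" using comp[OF that(2)] .
        finally show ?thesis .
      qed
      have "W (m x k') = P (W (m x k'))"
        using a[OF x(1) xk'E] commute[OF W We P(1) pW xk'E] by simp
      moreover have "m (W x) k' = P (m (W x) k')" using a[OF WxE Wk'E] .
      ultimately have z1eq: "z1 = P (W (m x k')) - P (m (W x) k')" unfolding z1_def by simp
      hence "P z1 = P (P (W (m x k'))) - P (P (m (W x) k'))"
        using bm(2) bf(1) g(1)[OF xk'E] Wk'E by simp
      thus ?thesis using z1eq bf(4) g(1)[OF xk'E] Wk'E by simp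
    qed
    have Pz2: "P z2 = 0"
    proof -
      have a: "P (m y rr) = 0" if "m y rr \<in> E" for y
      proof -
        have "P (m y rr) = m (m y rr) p" using comp[OF that] by simp
        also have "\<dots> = m y (m rr p)" by (simp add: assoc)
        also have "\<dots> = 0" using comp[OF rrE] Prr by simp
        finally show ?thesis .
      qed
      have "P (W (m x rr)) = 0" using commute[OF W We P(1) pW xrrE] a[OF xrrE] g(4) by simp
      thus ?thesis unfolding z2_def using bm(2) g(1)[OF xrrE] WrrE a[OF WrrE] by simp
    qed
    define w where "w = \<epsilon> *\<^sub>R W x"
    have wE: "w \<in> E" unfolding w_def using WxE by auto
    have z2b: "z2 \<le> w" "- z2 \<le> w"
    proof -
      have b1: "0 \<le> m x rr" using pos x rr0 by simp
      have b2: "m x rr \<le> \<epsilon> *\<^sub>R x" using monoR[OF x(2) rrb] by (simp add: scaleR)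
      have c1: "0 \<le> W (m x rr)" using g(7)[OF xrrE b1] .
      have "W (m x rr) \<le> W (\<epsilon> *\<^sub>R x)" using g(8)[OF xrrE E_scale[OF x(1)] b2] .
      hence c2: "W (m x rr) \<le> w" unfolding w_def using g(3)[OF x(1)] by simp
      note c1 c2
      moreover have "0 \<le> m (W x) rr" "m (W x) rr \<le> w"
        unfolding w_def using pos[OF Wx0 rr0] monoR[OF Wx0 rrb] by (auto simp: scaleR)
      ultimately show "z2 \<le> w" "- z2 \<le> w" unfolding z2_def
        by (auto simp: algebra_simps intro: add_increasing2 add_increasing)
    qed
    have z1b: "z1 \<le> w" "- z1 \<le> w" using IH unfolding w_def z1_def by (auto simp: vabs_le_iff)
    have "z1 + z2 \<le> w"
    proof -
      have "P z1 \<le> P w" using bm(4)[OF z1E wE z1b(1)] .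
      moreover have "z2 - P z2 \<le> w - P w" using bm(5)[OF z2E wE z2b(1)] .
      ultimately have "P z1 + (z2 - P z2) \<le> P w + (w - P w)" by (rule add_mono)
      thus ?thesis using Pz1 Pz2 by simp
    qed
    moreover have "- (z1 + z2) \<le> w"
    proof -
      have "P (- z1) \<le> P w" using bm(4)[OF _ wE z1b(2)] z1E by auto
      moreover have "- z2 - P (- z2) \<le> w - P w" using bm(5)[OF _ wE z2b(2)] z2E by auto
      ultimately have "P (- z1) + (- z2 - P (- z2)) \<le> P w + (w - P w)" by (rule add_mono)
      thus ?thesis using Pz1 Pz2 bm(3) z1E z2E by simp
    qed
    ultimately show "vabs (W (m x k) - m (W x) k) \<le> \<epsilon> *\<^sub>R W x"
      unfolding zdec w_def by (simp add: vabs_le_iff)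
  qed
qed

end



context rs begin

lemma avg_pos_bounded:
  assumes F: "f_algebra_unit m e" and W: "cond_exp E W" and We: "W e = e"
    and x: "x \<in> E" "0 \<le> x" and k: "k \<in> W ` E" "0 \<le> k" "k \<le> c *\<^sub>R e" and c: "0 \<le> c"
  shows "W (m x k) = m (W x) k"
proof -
  define d where "d = W (m x k) - m (W x) k"
  have "vabs d = 0"
  proof (rule arch_eps)
    show "0 \<le> vabs d" by simp
    fix \<epsilon> :: real assume eps: "0 < \<epsilon>"
    define M where "M = nat \<lceil>c / \<epsilon>\<rceil>"
    have "c / \<epsilon> \<le> real M" unfolding M_def by (rule real_nat_ceiling_ge)
    hence "c \<le> real M * \<epsilon>" using eps by (simp add: field_simps)
    hence ce: "c *\<^sub>R e \<le> (real M * \<epsilon>) *\<^sub>R e" by (intro scaleR_right_mono) auto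
    have "k \<le> (real M * \<epsilon>) *\<^sub>R e" using order_trans[OF k(3) ce] .
    thus "vabs d \<le> \<epsilon> *\<^sub>R W x" using avg_induct[OF F W We x eps, of M] k unfolding d_def by blast
  qed
  thus ?thesis unfolding d_def by (simp add: vabs_eq_0)
qed

lemma avg_bounded:
  assumes F: "f_algebra_unit m e" and W: "cond_exp E W" and We: "W e = e"
    and x: "x \<in> E" and k: "k \<in> W ` E" "vabs k \<le> c *\<^sub>R e" and c: "0 \<le> c"
  shows "W (m x k) = m (W x) k"
proof -
  interpret fa m e by (rule fa.intro[OF F])
  note g = ce_facts[OF W] and r = rng_more[OF W]
  have kE: "k \<in> E" using g(11)[OF k(1)] .
  have posk: "W (m y kk) = m (W y) kk" if y: "y \<in> E" and kk: "kk \<in> W ` E" "0 \<le> kk" "kk \<le> c *\<^sub>R e" for y kk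
  proof -
    have kkE: "kk \<in> E" using g(11)[OF kk(1)] .
    have vkk: "vabs kk \<le> c *\<^sub>R e" using kk by simp
    have yp: "pprt y \<in> E" "0 \<le> pprt y" and yn: "- nprt y \<in> E" "0 \<le> - nprt y" using y by auto
    have dec: "y = pprt y - (- nprt y)" using prts[of y] by simp
    have e1: "m (pprt y) kk \<in> E" "m (- nprt y) kk \<in> E"
      using prod_E(1)[OF F yp(1) kkE vkk c] prod_E(1)[OF F yn(1) kkE vkk c] by auto
    have "m y kk = m (pprt y - (- nprt y)) kk" using dec by simp
    also have "\<dots> = m (pprt y) kk - m (- nprt y) kk" by (rule diffL)
    finally have "m y kk = m (pprt y) kk - m (- nprt y) kk" .
    hence "W (m y kk) = W (m (pprt y) kk) - W (m (- nprt y) kk)" using g(6)[OF e1] by simp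
    also have "\<dots> = m (W (pprt y)) kk - m (W (- nprt y)) kk"
      using avg_pos_bounded[OF F W We yp kk c] avg_pos_bounded[OF F W We yn kk c] by simp
    also have "\<dots> = m (W (pprt y) - W (- nprt y)) kk" by (rule diffL[symmetric])
    also have "W (pprt y) - W (- nprt y) = W y" using g(6)[OF yp(1) yn(1)] dec by simp
    finally show ?thesis .
  qed
  have kp: "pprt k \<in> W ` E" "0 \<le> pprt k" "pprt k \<le> c *\<^sub>R e"
    using r(5)[OF k(1)] order_trans[OF pprt_le_vabs k(2)] by auto
  have kn: "- nprt k \<in> W ` E" "0 \<le> - nprt k" "- nprt k \<le> c *\<^sub>R e"
    using r(1)[OF r(6)[OF k(1)]] order_trans[OF nprt_le_vabs k(2)] by auto
  have kpE: "pprt k \<in> E" and knE: "- nprt k \<in> E" using kE by auto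
  have vkp: "vabs (pprt k) \<le> c *\<^sub>R e" using kp by simp
  have vkn: "vabs (- nprt k) \<le> c *\<^sub>R e" using kn(3) vabs_pos[OF kn(2)] by (simp only:)
  have dec: "k = pprt k - (- nprt k)" using prts[of k] by simp
  have e1: "m x (pprt k) \<in> E" "m x (- nprt k) \<in> E"
    using prod_E(1)[OF F x kpE vkp c] prod_E(1)[OF F x knE vkn c] by auto
  have "m x k = m x (pprt k - (- nprt k))" using dec by simp
  also have "\<dots> = m x (pprt k) - m x (- nprt k)" by (rule diffR)
  finally have "m x k = m x (pprt k) - m x (- nprt k)" .
  hence "W (m x k) = W (m x (pprt k)) - W (m x (- nprt k))" using g(6)[OF e1] by simp
  also have "\<dots> = m (W x) (pprt k) - m (W x) (- nprt k)" using posk[OF x kp] posk[OF x kn] by simp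
  also have "\<dots> = m (W x) (pprt k - (- nprt k))" by (rule diffR[symmetric])
  also have "pprt k - (- nprt k) = k" using dec by simp
  finally show ?thesis .
qed

lemma avg:
  assumes F: "f_algebra_unit m e" and W: "cond_exp E W" and We: "W e = e"
    and x: "x \<in> E" "vabs x \<le> c *\<^sub>R e" and c: "0 \<le> c" and k: "k \<in> W ` E"
  shows "W (m x k) = m (W x) k"
proof -
  interpret fa m e by (rule fa.intro[OF F])
  note g = ce_facts[OF W] and r = rng_more[OF W]
  have kE: "k \<in> E" using g(11)[OF k] .
  have eW: "e \<in> W ` E" proof - have "W e \<in> W ` E" by (rule imageI[OF e_E]) thus ?thesis using We by simp qed
  have xkE: "m x k \<in> E" using prod_E(2)[OF F kE x c] .
  have WxE: "W x \<in> E" using g(1)[OF x(1)] .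
  have vWx: "vabs (W x) \<le> c *\<^sub>R e"
  proof -
    have ceE: "c *\<^sub>R e \<in> E" by auto
    have "x \<le> c *\<^sub>R e" "- x \<le> c *\<^sub>R e" using x(2) by (auto simp: vabs_le_iff)
    hence "W x \<le> W (c *\<^sub>R e)" "W (- x) \<le> W (c *\<^sub>R e)" using g(8) x(1) ceE by auto
    thus ?thesis using g(3)[OF e_E] g(5)[OF x(1)] We by (simp add: vabs_le_iff)
  qed
  have WxkE: "m (W x) k \<in> E" using prod_E(2)[OF F kE WxE vWx c] .
  define z where "z = W (m x k) - m (W x) k"
  have zE: "z \<in> E" unfolding z_def using g(1)[OF xkE] WxkE by auto
  have disjN: "inf (vabs z) (- nprt (vabs k - real N *\<^sub>R e)) = 0" for N :: nat
  proof -
    define h where "h = vabs k - real N *\<^sub>R e"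
    have hW: "h \<in> W ` E" unfolding h_def by (intro r(2) r(7) k g(13) eW)
    have hE: "h \<in> E" using g(11)[OF hW] .
    obtain P where P: "band_projection E P" "P h = pprt h"
      and Pd: "\<And>y. y \<in> E \<Longrightarrow> inf (vabs (P y)) (- nprt h) = 0"
      and PeW: "\<And>W. cond_exp E W \<Longrightarrow> W e = e \<Longrightarrow> h \<in> W ` E \<Longrightarrow> P e \<in> W ` E"
      using sign_proj[OF hE] by metis
    note bf = bp_facts[OF P(1)] and bm = bp_more[OF P(1)]
    have pW: "P e \<in> W ` E" using PeW[OF W We hW] .
    have comp: "m y (P e) = P y" if "y \<in> E" for y using component(2)[OF F P(1) that] .
    define Q where "Q y = y - P y" for y
    have WQ: "W (Q y) = Q (W y)" if "y \<in> E" for y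
      unfolding Q_def using commute[OF W We P(1) pW that] g(6) bf(1) that by simp
    have QkE: "Q k \<in> E" unfolding Q_def using kE bf(1) by auto
    have QkW: "Q k \<in> W ` E"
    proof -
      have "W (Q k) = Q k" using WQ[OF kE] g(10)[OF k] by simp
      hence "W (Q k) \<in> W ` E" using imageI[OF QkE, of W] by simp
      thus ?thesis using \<open>W (Q k) = Q k\<close> by simp
    qed
    have vkE: "vabs k \<in> E" using kE by auto
    have Qvk: "Q (vabs k) \<le> real N *\<^sub>R e"
    proof -
      have vk: "vabs k = h + real N *\<^sub>R e" unfolding h_def by simp
      have "P (vabs k) = pprt h + real N *\<^sub>R P e"
        unfolding vk using bf(2)[OF hE E_scale[OF e_E]] bf(3)[OF e_E] P(2) by simp
      hence "Q (vabs k) = nprt h + real N *\<^sub>R (e - P e)"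
        unfolding Q_def using vk prts[of h] by (simp add: algebra_simps scaleR_diff_right)
      also have "\<dots> \<le> real N *\<^sub>R e"
      proof -
        have "0 \<le> real N *\<^sub>R P e" using bf(6)[OF e_E] by (simp add: scaleR_nonneg_nonneg)
        hence "nprt h \<le> real N *\<^sub>R P e" using order_trans[OF nprt_le_zero] by blast
        thus ?thesis by (simp add: algebra_simps scaleR_diff_right)
      qed
      finally show ?thesis .
    qed
    have vQk: "vabs (Q k) \<le> real N *\<^sub>R e"
    proof -
      have "Q k \<le> Q (vabs k)" unfolding Q_def using bm(5)[OF kE vkE vabs_ge(1)] .
      moreover have "- Q k \<le> Q (vabs k)"
      proof -
        have "Q (- k) \<le> Q (vabs k)" unfolding Q_def using bm(5)[OF E_uminus[OF kE] vkE vabs_ge(2)] .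
        thus ?thesis unfolding Q_def using bm(3)[OF kE] by simp
      qed
      ultimately show ?thesis using Qvk by (auto simp: vabs_le_iff)
    qed
    have Qprod: "Q (m y k) = m y (Q k)" if "y \<in> E" "m y k \<in> E" for y
    proof -
      have "Q (m y k) = m y k - m (m y k) (P e)" unfolding Q_def using comp[OF that(2)] by simp
      also have "\<dots> = m y k - m y (m k (P e))" by (simp add: assoc)
      also have "\<dots> = m y (Q k)" unfolding Q_def using comp[OF kE] by (simp add: diffR)
      finally show ?thesis .
    qed
    have "Q z = Q (W (m x k)) - Q (m (W x) k)"
      unfolding z_def Q_def using bm(2)[OF g(1)[OF xkE] WxkE] by simp
    also have "\<dots> = W (Q (m x k)) - Q (m (W x) k)" using WQ[OF xkE] by simp
    also have "\<dots> = W (m x (Q k)) - m (W x) (Q k)" using Qprod[OF x(1) xkE] Qprod[OF WxE WxkE] by simp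
    also have "\<dots> = 0" using avg_bounded[OF F W We x(1) QkW vQk] by simp
    finally have "Q z = 0" .
    hence "P z = z" unfolding Q_def by simp
    thus ?thesis using Pd[OF zE] unfolding h_def by simp
  qed
  define u where "u = inf (vabs z) e"
  have u0: "0 \<le> u" unfolding u_def by simp
  have "u = 0"
  proof (rule arch[OF u0])
    fix N :: nat
    show "real N *\<^sub>R u \<le> vabs k"
    proof (cases "N = 0")
      case True then show ?thesis by simp
    next
      case False
      hence N1: "1 \<le> real N" by simp
      define w where "w = - nprt (vabs k - real N *\<^sub>R e)"
      have w0: "0 \<le> w" unfolding w_def by simp
      have wge: "real N *\<^sub>R e \<le> w + vabs k"
      proof -
        have "- (vabs k - real N *\<^sub>R e) \<le> w" unfolding w_def nprt_def by (simp add: neg_inf_eq_sup)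
        thus ?thesis by (simp add: algebra_simps)
      qed
      have "real N *\<^sub>R u = inf (real N *\<^sub>R vabs z) (real N *\<^sub>R e)"
        unfolding u_def by (rule scaleR_inf) simp
      also have "\<dots> \<le> inf (real N *\<^sub>R vabs z) (w + vabs k)" by (rule inf_mono[OF order_refl wge])
      also have "\<dots> \<le> inf (real N *\<^sub>R vabs z) w + inf (real N *\<^sub>R vabs z) (vabs k)"
        by (rule inf_sub_additive) (auto simp: w0 scaleR_nonneg_nonneg)
      also have "inf (real N *\<^sub>R vabs z) w \<le> inf (real N *\<^sub>R vabs z) (real N *\<^sub>R w)"
      proof (rule inf_mono[OF order_refl])
        show "w \<le> real N *\<^sub>R w" using scaleR_right_mono[OF N1 w0] by simp
      qed
      also have "\<dots> = real N *\<^sub>R inf (vabs z) w" by (rule scaleR_inf[symmetric]) simp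
      also have "inf (vabs z) w = 0" using disjN[of N] unfolding w_def .
      finally show ?thesis by simp
    qed
  qed
  hence "z = 0" using e_unitD[OF zE] unfolding u_def by simp
  thus ?thesis unfolding z_def by simp
qed

end



context rs begin

lemma rng_T_sub:
  assumes T: "cond_exp E T" and U: "cond_exp E U" and comp: "compatible E T U" and y: "y \<in> T ` E"
  shows "y \<in> U ` E"
proof -
  obtain x where x: "x \<in> E" "y = T x" using y by blast
  have "U y = y" using comp x unfolding compatible_def by simp
  moreover have yE: "y \<in> E" using ce_facts(11)[OF T y] .
  ultimately show ?thesis using imageI[OF yE, of U] by simp
qed

lemma normTinf_props:
  assumes T: "cond_exp E T" and f: "f \<in> Linfty E T"
  shows "normTinf E T f \<in> T ` E" "0 \<le> normTinf E T f" "vabs f \<le> normTinf E T f"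
proof -
  note g = ce_facts[OF T] and r = rng_more[OF T]
  define G where "G = {g \<in> T ` E. 0 \<le> g \<and> vabs f \<le> g}"
  have GE: "G \<subseteq> E" unfolding G_def using g(11) by blast
  have ne: "G \<noteq> {}" using f unfolding Linfty_def G_def by blast
  have lb: "\<And>x. x \<in> G \<Longrightarrow> 0 \<le> x" unfolding G_def by blast
  note I = Inf_in_E[OF GE ne E_0 lb]
  define k where "k = Inf G"
  have kE: "k \<in> E" unfolding k_def using I by simp
  have fk: "vabs f \<le> k" unfolding k_def using ne by (intro cInf_greatest) (auto simp: G_def)
  have k0: "0 \<le> k" using order_trans[OF vabs_nonneg fk] .
  have kle: "\<And>g. g \<in> G \<Longrightarrow> k \<le> g" unfolding k_def using I(3) by (intro cInf_lower) auto
  have Tk: "T k = k"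
  proof (rule antisym)
    have "T k \<le> Inf G"
    proof (rule cInf_greatest[OF ne])
      fix x assume x: "x \<in> G"
      have "T k \<le> T x" using g(8)[OF kE _ kle[OF x]] GE x by auto
      also have "T x = x" using x g(10) unfolding G_def by blast
      finally show "T k \<le> x" .
    qed
    thus "T k \<le> k" unfolding k_def .
    define D' where "D' = (\<lambda>x. x - k) ` G"
    have D'E: "D' \<subseteq> E" unfolding D'_def using GE kE by auto
    have D'ne: "D' \<noteq> {}" unfolding D'_def using ne by simp
    have D'dd: "down_directed D'" unfolding D'_def down_directed_def
    proof (intro ballI)
      fix u v assume "u \<in> (\<lambda>x. x - k) ` G" "v \<in> (\<lambda>x. x - k) ` G"
      then obtain a b where ab: "a \<in> G" "b \<in> G" "u = a - k" "v = b - k" by blast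
      have "inf a b \<in> G" using ab r(3) unfolding G_def by auto
      thus "\<exists>z\<in>(\<lambda>x. x - k) ` G. z \<le> u \<and> z \<le> v" using ab by (intro bexI[of _ "inf a b - k"]) auto
    qed
    have glb: "is_glb_in E D' 0" unfolding is_glb_in_def
    proof (intro conjI ballI impI)
      show "0 \<in> E" by simp
      show "\<And>x. x \<in> D' \<Longrightarrow> 0 \<le> x" unfolding D'_def using kle by auto
      fix l assume l: "l \<in> E" "\<forall>x\<in>D'. l \<le> x"
      have "l + k \<le> Inf G"
      proof (rule cInf_greatest[OF ne])
        fix x assume "x \<in> G"
        hence "l \<le> x - k" using l unfolding D'_def by blast
        thus "l + k \<le> x" by (simp add: algebra_simps)
      qed
      hence "l + k \<le> k" unfolding k_def .
      thus "l \<le> 0" by simp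
    qed
    have oc: "order_continuous_on E T" using T by (simp add: cond_exp_def)
    have glbT: "is_glb_in E (T ` D') 0" using oc D'E D'ne D'dd glb unfolding order_continuous_on_def by blast
    have "k - T k \<in> E" using kE g(1) by auto
    moreover have "\<forall>y\<in>T ` D'. k - T k \<le> y"
    proof
      fix y assume "y \<in> T ` D'"
      then obtain x where x: "x \<in> G" "y = T (x - k)" unfolding D'_def by blast
      have "T (x - k) = T x - T k" using g(6) GE x kE by auto
      also have "T x = x" using x g(10) unfolding G_def by blast
      finally show "k - T k \<le> y" using x kle by simp
    qed
    ultimately have "k - T k \<le> 0" using glbT unfolding is_glb_in_def by blast
    thus "k \<le> T k" by simp
  qed
  have kT: "k \<in> T ` E" using Tk imageI[OF kE, of T] by simp
  have "is_glb_in (T ` E) G k" unfolding is_glb_in_def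
  proof (intro conjI ballI impI)
    show "k \<in> T ` E" by fact
    show "\<And>x. x \<in> G \<Longrightarrow> k \<le> x" by (rule kle)
    fix b assume "b \<in> T ` E" "\<forall>x\<in>G. b \<le> x"
    thus "b \<le> k" unfolding k_def using ne by (intro cInf_greatest) auto
  qed
  hence eq: "normTinf E T f = k" unfolding normTinf_def G_def[symmetric] by (rule inf_in_eq)
  show "normTinf E T f \<in> T ` E" "0 \<le> normTinf E T f" "vabs f \<le> normTinf E T f"
    unfolding eq using kT k0 fk by auto
qed

lemma unit_interval:
  assumes W: "cond_exp E W" and We: "W e = e" and P: "band_projection E P" and y: "y \<in> E" "0 \<le> y" "y \<le> e"
  shows "0 \<le> W (P y)" "W (P y) \<le> e" "W (P y) \<in> E"
proof -
  note g = ce_facts[OF W] and h = bp_facts[OF P] and k = bp_more[OF P]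
  have "0 \<le> P y" "P y \<le> y" using h(6) h(7) y by auto
  moreover have PyE: "P y \<in> E" using h(1) y by simp
  ultimately show "0 \<le> W (P y)" "W (P y) \<le> e" using g(7) g(8)[OF PyE e_E] y We by auto
  show "W (P y) \<in> E" using g(1)[OF PyE] .
qed

lemma alpha_bound:
  assumes F: "f_algebra_unit m e" and T: "cond_exp E T" and Te: "T e = e"
    and P: "P \<in> BP E e U" and Q: "Q \<in> BP E e V"
  shows "vabs (T (P (Q e)) - m (T (P e)) (T (Q e))) \<le> alphaT E m e T U V"
proof -
  interpret fa m e by (rule fa.intro[OF F])
  define S where "S = {vabs (T (P (Q e)) - m (T (P e)) (T (Q e))) | P Q. P \<in> BP E e U \<and> Q \<in> BP E e V}"
  have gen: "z \<in> E \<and> z \<le> e + e" if zS: "z \<in> S" for z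
  proof -
    obtain P Q where PQ: "P \<in> BP E e U" "Q \<in> BP E e V" "z = vabs (T (P (Q e)) - m (T (P e)) (T (Q e)))"
      using zS unfolding S_def by blast
    have Pb: "band_projection E P" and Qb: "band_projection E Q" using PQ unfolding BP_def by auto
    have Qe: "Q e \<in> E" "0 \<le> Q e" "Q e \<le> e" using bp_facts(1,6,7)[OF Qb] by auto
    have a: "0 \<le> T (P (Q e))" "T (P (Q e)) \<le> e" "T (P (Q e)) \<in> E" using unit_interval[OF T Te Pb Qe] by auto
    have b1: "0 \<le> T (P e)" "T (P e) \<le> e" "T (P e) \<in> E" using unit_interval[OF T Te Pb e_E] by auto
    have b2: "0 \<le> T (Q e)" "T (Q e) \<le> e" "T (Q e) \<in> E" using unit_interval[OF T Te Qb e_E] by auto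
    have b: "0 \<le> m (T (P e)) (T (Q e))" "m (T (P e)) (T (Q e)) \<le> e"
    proof -
      show "0 \<le> m (T (P e)) (T (Q e))" using pos b1 b2 by simp
      have "m (T (P e)) (T (Q e)) \<le> m e (T (Q e))" using monoL[OF b2(1) b1(2)] .
      thus "m (T (P e)) (T (Q e)) \<le> e" using b2 by simp
    qed
    have bE: "m (T (P e)) (T (Q e)) \<in> E" using prod_E(1)[OF F b1(3) b2(3), of 1] b2 by simp
    have "z \<in> E" unfolding PQ(3) using a(3) bE by auto
    moreover have "z \<le> e + e"
    proof -
      have "z \<le> vabs (T (P (Q e))) + vabs (m (T (P e)) (T (Q e)))" unfolding PQ(3) by (rule vabs_diff)
      also have "\<dots> \<le> e + e" using a b by (simp add: add_mono)
      finally show ?thesis .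
    qed
    ultimately show ?thesis by simp
  qed
  have elem: "vabs (T (P (Q e)) - m (T (P e)) (T (Q e))) \<in> S" unfolding S_def using P Q by blast
  have SE: "S \<subseteq> E" using gen by blast
  have ne: "S \<noteq> {}" using elem by blast
  have ub: "\<And>z. z \<in> S \<Longrightarrow> z \<le> e + e" using gen by blast
  have eeE: "e + e \<in> E" by auto
  note SI = Sup_in_E[OF SE ne eeE ub]
  have lub: "is_lub_in E S (Sup S)" using SI(2) by simp
  have "alphaT E m e T U V = Sup S" unfolding alphaT_def S_def[symmetric] by (rule sup_in_eq[OF lub])
  moreover have "vabs (T (P (Q e)) - m (T (P e)) (T (Q e))) \<le> Sup S"
    using cSup_upper[OF elem SI(3)] by simp
  ultimately show ?thesis by simp
qed

end



context rs begin

lemma main: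
  assumes F: "f_algebra_unit m e" and T: "cond_exp E T" and Te: "T e = e"
    and U: "cond_exp E U" and V: "cond_exp E V"
    and Uc: "compatible E T U" and Vc: "compatible E T V"
    and fV: "f \<in> V ` E" and fL: "f \<in> Linfty E T"
  shows "normT1 T (U f - T f) \<le> (4::real) *\<^sub>R m (alphaT E m e T U V) (normTinf E T f)"
proof -
  interpret fa m e by (rule fa.intro[OF F])
  note F' = fa_flip[OF F]
  note gT = ce_facts[OF T] and gU = ce_facts[OF U] and gV = ce_facts[OF V]
  note rT = rng_more[OF T] and rU = rng_more[OF U] and rV = rng_more[OF V]
  have TU: "\<And>x. x \<in> E \<Longrightarrow> T (U x) = T x" and UT: "\<And>x. x \<in> E \<Longrightarrow> U (T x) = T x"
    using Uc unfolding compatible_def by auto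
  have TV: "\<And>x. x \<in> E \<Longrightarrow> T (V x) = T x" and VT: "\<And>x. x \<in> E \<Longrightarrow> V (T x) = T x"
    using Vc unfolding compatible_def by auto
  have Ue: "U e = e" using UT[OF e_E] Te by simp
  have Ve: "V e = e" using VT[OF e_E] Te by simp
  have fE: "f \<in> E" using gV(11)[OF fV] .
  define K where "K = normTinf E T f"
  have KT: "K \<in> T ` E" and K0: "0 \<le> K" and fK: "vabs f \<le> K"
    using normTinf_props[OF T fL] unfolding K_def by auto
  have KE: "K \<in> E" using gT(11)[OF KT] .
  have TfE: "T f \<in> E" using gT(1)[OF fE] .
  have TfT: "T f \<in> T ` E" using imageI[OF fE] .
  define h where "h = U f - T f"
  have hU: "h \<in> U ` E" unfolding h_def
    by (intro rU(2) imageI[OF fE] rng_T_sub[OF T U Uc TfT])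
  have hE: "h \<in> E" using gU(11)[OF hU] .
  obtain P where P: "band_projection E P" "P h = pprt h"
    and PeW: "\<And>W. cond_exp E W \<Longrightarrow> W e = e \<Longrightarrow> h \<in> W ` E \<Longrightarrow> P e \<in> W ` E"
    using sign_proj[OF hE] by metis
  note bfP = bp_facts[OF P(1)] and bmP = bp_more[OF P(1)]
  have pU: "P e \<in> U ` E" using PeW[OF U Ue hU] .
  have PBP: "P \<in> BP E e U" unfolding BP_def using P(1) pU by simp
  define p where "p = P e"
  have pE: "p \<in> E" and p0: "0 \<le> p" and pe: "p \<le> e" unfolding p_def using bfP(1,6,7) by auto
  have vp: "vabs p \<le> 1 *\<^sub>R e" using p0 pe by simp
  have Tp: "0 \<le> T p" "T p \<le> e" "T p \<in> E" using unit_interval[OF T Te P(1) e_E] unfolding p_def by auto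
  have TpT: "T p \<in> T ` E" using imageI[OF pE] .
  have vTp: "vabs (T p) \<le> 1 *\<^sub>R e" using Tp by simp
  have Vp: "0 \<le> V p" "V p \<le> e" "V p \<in> E" using unit_interval[OF V Ve P(1) e_E] unfolding p_def by auto
  define r where "r = V p - T p"
  have rE: "r \<in> E" unfolding r_def using Vp Tp by auto
  have rV: "r \<in> V ` E" unfolding r_def by (intro rV(2) imageI[OF pE] rng_T_sub[OF T V Vc TpT])
  have vr: "vabs r \<le> 2 *\<^sub>R e"
  proof -
    have "vabs r \<le> vabs (V p) + vabs (T p)" unfolding r_def by (rule vabs_diff)
    also have "\<dots> \<le> e + e" using Vp Tp by (simp add: add_mono)
    finally show ?thesis by (simp add: scaleR_2)
  qed
  have vrE: "vabs r \<in> E" using rE by auto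
  have Th0: "T h = 0" unfolding h_def using gT(6)[OF gU(1)[OF fE] TfE] TU[OF fE] gT(9)[OF fE] by simp
  have step1: "T (vabs h) = 2 *\<^sub>R T (P h)"
  proof -
    have "vabs h = 2 *\<^sub>R pprt h - h" using prts[of h] by (simp add: vabs_prts scaleR_2 algebra_simps)
    hence "T (vabs h) = T (2 *\<^sub>R pprt h) - T h" using gT(6)[OF E_scale[OF E_pprt[OF hE]] hE] by simp
    hence "T (vabs h) = 2 *\<^sub>R T (pprt h) - T h" using gT(3)[OF E_pprt[OF hE]] by simp
    thus ?thesis using Th0 P(2) by simp
  qed
  have step2: "T (P h) = T (m r f)"
  proof -
    have PUf: "P (U f) = U (P f)" using commute[OF U Ue P(1) pU fE] by simp
    have a: "T (P (U f)) = T (P f)" using PUf TU bfP(1)[OF fE] by simp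
    have pfE: "m p f \<in> E" using prod_E(2)[OF F fE pE vp] by simp
    have b: "T (P f) = T (m (V p) f)"
    proof -
      have "P f = m p f" using component(1)[OF F P(1) fE] unfolding p_def by simp
      hence "T (P f) = T (V (m p f))" using TV[OF pfE] by simp
      also have "V (m p f) = m (V p) f" using avg[OF F V Ve pE vp _ fV] by simp
      finally show ?thesis .
    qed
    have c: "T (P (T f)) = T (m (T p) f)"
    proof -
      have "P (T f) = m p (T f)" using component(1)[OF F P(1) TfE] unfolding p_def by simp
      hence "T (P (T f)) = m (T p) (T f)" using avg[OF F T Te pE vp _ TfT] by simp
      also have "\<dots> = T (m (T p) f)" using avg_bounded[OF F' T Te fE TpT vTp] by simp
      finally show ?thesis .
    qed
    have VpfE: "m (V p) f \<in> E" using prod_E(2)[OF F fE Vp(3), of 1] Vp by simp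
    have TpfE: "m (T p) f \<in> E" using prod_E(2)[OF F fE Tp(3) vTp] by simp
    have "T (P h) = T (P (U f)) - T (P (T f))"
      unfolding h_def using bmP(2)[OF gU(1)[OF fE] TfE] gT(6) bfP(1) gU(1)[OF fE] TfE by simp
    also have "\<dots> = T (m (V p) f) - T (m (T p) f)" using a b c by simp
    also have "\<dots> = T (m (V p) f - m (T p) f)" using gT(6)[OF VpfE TpfE] by simp
    also have "m (V p) f - m (T p) f = m r f" unfolding r_def by (rule diffL[symmetric])
    finally show ?thesis .
  qed
  have rfE: "m r f \<in> E" using prod_E(2)[OF F fE rE vr] by simp
  have rKE: "m (vabs r) K \<in> E" using prod_E(2)[OF F KE vrE, of 2] vr by simp
  have step3: "T (m r f) \<le> m (T (vabs r)) K"
  proof -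
    have "m r f \<le> m (vabs r) (vabs f)" by (rule le_abs_prod)
    also have "\<dots> \<le> m (vabs r) K" using monoR[OF vabs_nonneg fK] .
    finally have "T (m r f) \<le> T (m (vabs r) K)" using gT(8)[OF rfE rKE] by simp
    also have "T (m (vabs r) K) = m (T (vabs r)) K" using avg[OF F T Te vrE _ _ KT, of 2] vr by simp
    finally show ?thesis .
  qed
  obtain Q where Q: "band_projection E Q" "Q r = pprt r"
    and QeW: "\<And>W. cond_exp E W \<Longrightarrow> W e = e \<Longrightarrow> r \<in> W ` E \<Longrightarrow> Q e \<in> W ` E"
    using sign_proj[OF rE] by metis
  note bfQ = bp_facts[OF Q(1)] and bmQ = bp_more[OF Q(1)]
  have qV: "Q e \<in> V ` E" using QeW[OF V Ve rV] .
  have QBP: "Q \<in> BP E e V" unfolding BP_def using Q(1) qV by simp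
  define q where "q = Q e"
  have qE: "q \<in> E" and q0: "0 \<le> q" and qe: "q \<le> e" unfolding q_def using bfQ(1,6,7) by auto
  have vq: "vabs q \<le> 1 *\<^sub>R e" using q0 qe by simp
  have Tr0: "T r = 0" unfolding r_def using gT(6)[OF Vp(3) Tp(3)] TV[OF pE] gT(9)[OF pE] by simp
  have Tvr: "T (vabs r) = 2 *\<^sub>R T (Q r)"
  proof -
    have "vabs r = 2 *\<^sub>R pprt r - r" using prts[of r] by (simp add: vabs_prts scaleR_2 algebra_simps)
    hence "T (vabs r) = T (2 *\<^sub>R pprt r) - T r" using gT(6)[OF E_scale[OF E_pprt[OF rE]] rE] by simp
    hence "T (vabs r) = 2 *\<^sub>R T (pprt r) - T r" using gT(3)[OF E_pprt[OF rE]] by simp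
    thus ?thesis using Tr0 Q(2) by simp
  qed
  have TQr: "T (Q r) = T (P (Q e)) - m (T (P e)) (T (Q e))"
  proof -
    have a: "T (Q (V p)) = T (Q p)"
    proof -
      have "Q (V p) = V (Q p)" using commute[OF V Ve Q(1) qV pE] by simp
      thus ?thesis using TV[OF bfQ(1)[OF pE]] by simp
    qed
    have Qp: "Q p = P (Q e)"
    proof -
      have "Q p = m p q" using component(2)[OF F Q(1) pE] unfolding q_def by simp
      also have "\<dots> = P q" using component(1)[OF F P(1) qE] unfolding p_def by simp
      finally show ?thesis unfolding q_def .
    qed
    have b: "T (Q (T p)) = m (T p) (T q)"
    proof -
      have "Q (T p) = m (T p) q" using component(2)[OF F Q(1) Tp(3)] unfolding q_def by simp
      moreover have "T (m (T p) q) = m (T p) (T q)" using avg_bounded[OF F' T Te qE TpT vTp] by simp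
      ultimately show ?thesis by simp
    qed
    have "T (Q r) = T (Q (V p)) - T (Q (T p))"
      unfolding r_def using bmQ(2)[OF Vp(3) Tp(3)] gT(6) bfQ(1) Vp(3) Tp(3) by simp
    thus ?thesis using a b Qp unfolding p_def q_def by simp
  qed
  have step4: "T (vabs r) \<le> 2 *\<^sub>R alphaT E m e T U V"
  proof -
    have "T (Q r) \<le> vabs (T (Q r))" by (rule vabs_ge)
    also have "\<dots> \<le> alphaT E m e T U V" unfolding TQr by (rule alpha_bound[OF F T Te PBP QBP])
    finally show ?thesis unfolding Tvr by (intro scaleR_left_mono) auto
  qed
  have "normT1 T (U f - T f) = T (vabs h)" unfolding normT1_def h_def ..
  also have "\<dots> = 2 *\<^sub>R T (m r f)" using step1 step2 by simp
  also have "\<dots> \<le> 2 *\<^sub>R m (T (vabs r)) K" using step3 by (intro scaleR_left_mono) auto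
  also have "\<dots> \<le> 2 *\<^sub>R m (2 *\<^sub>R alphaT E m e T U V) K"
    using monoL[OF K0 step4] by (intro scaleR_left_mono) auto
  also have "\<dots> = (4::real) *\<^sub>R m (alphaT E m e T U V) K" by (simp add: scaleL)
  finally show ?thesis unfolding K_def .
qed

end

theorem theorem4p7:
  fixes E :: "'a::{ordered_real_vector,lattice_ab_group_add,conditionally_complete_lattice} set"
    and m :: "'a \<Rightarrow> 'a \<Rightarrow> 'a"
    and e :: 'a
    and T U V :: "'a \<Rightarrow> 'a"
    and f :: 'a
  assumes E_riesz: "riesz_subspace E"
    and E_dc: "dedekind_complete_in E"
    and E_dense: "order_dense E"
    and univ_lat: "laterally_complete TYPE('a)"
    and falg: "f_algebra_unit m e"
    and e_unit: "weak_order_unit_in E e"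
    and T_ce: "cond_exp E T"
    and Te: "T e = e"
    and T_uc: "T_universally_complete E T"
    and U_ce: "cond_exp E U"
    and V_ce: "cond_exp E V"
    and U_comp: "compatible E T U"
    and V_comp: "compatible E T V"
    and f_RV: "f \<in> V ` E"
    and f_inf: "f \<in> Linfty E T"
  shows "normT1 T (U f - T f) \<le> (4::real) *\<^sub>R m (alphaT E m e T U V) (normTinf E T f)"
proof -
  interpret rs E e by (rule rs.intro[OF E_riesz E_dc E_dense e_unit])
  show ?thesis by (rule main[OF falg T_ce Te U_ce V_ce U_comp V_comp f_RV f_inf])
qed



end
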